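(* Suppose $\tau\in W^{1,\infty}((0,L);S^{n-1})$ satisfies (C), and let $k=K_\infty(\tau)$. If there exist $u\in W^{1,\infty}((0,L);\mathbb{R}^n)\setminus\{0\}$ and $\lambda\in\mathbb{R}^n$ such that \[ u'+(u\cdot\tau')\tau=\beta\bigl(\lambda-(\lambda\cdot\tau)\tau\bigr),\qquad |u|\,\tau'=k\,u \] hold almost everywhere in $(0,L)$, then $\tau$ is a pseudo-minimiser of $K_\infty$. If in addition $k|u|+\beta\,\lambda\cdot\tau\le0$ on $[0,L]$, then $\tau$ minimises $K_\infty$ among all $\tilde\tau\in W^{1,\infty}((0,L);S^{n-1})$ satisfying (C).
   Context: Standing setup: $n\ge2$, $\ell>0$, $\alpha\colon[0,\ell]\to(0,\infty)$ of bounded variation with $1/\alpha$ bounded; $\psi(s)=\int_0^sd\sigma/\alpha(\sigma)$, $L=\psi(\ell)$, $\phi=\psi^{-1}$, $\beta=\alpha\circ\phi$. Fix $a_1,a_2\in\mathbb{R}^n$, $T_1,T_2\in S^{n-1}$, $a=a_2-a_1$. Constraints (C) on $\tau\colon[0,L]\to S^{n-1}$: $\tau(0)=T_1$, $\tau(L)=T_2$, $\int_0^L\beta\tau\,dt=a$. $K_\infty(\tau)=\operatorname{ess\,sup}|\tau'|$. A map $\tau\in W^{1,\infty}((0,L);S^{n-1})$ satisfying (C) is a pseudo-minimiser of $K_\infty$ if there exists $m\in\mathbb{R}$ with $K_\infty(\tau)\le K_\infty(\tilde\tau)+\frac m{2L}\int_0^L\beta|\tilde\tau-\tau|^2\,dt$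 for all $\tilde\tau\in W^{1,\infty}((0,L);S^{n-1})$ satisfying (C). *)

theory Defs
  imports "HOL-Analysis.Analysis" "HOL-Probability.Essential_Supremum"
begin

definition bounded_variation_on :: "(real \<Rightarrow> real) \<Rightarrow> real \<Rightarrow> real \<Rightarrow> bool" where
  "bounded_variation_on f a b \<longleftrightarrow>
     (\<exists>B. \<forall>xs. sorted xs \<longrightarrow> set xs \<subseteq> {a..b} \<longrightarrow>
        (\<Sum>(x,y)\<leftarrow>zip xs (tl xs). \<bar>f y - f x\<bar>) \<le> B)"

definition psi :: "(real \<Rightarrow> real) \<Rightarrow> real \<Rightarrow> real" where
  "psi \<alpha> s = integral {0..s} (\<lambda>\<sigma>. 1 / \<alpha> \<sigma>)"

definition Lpar :: "(real \<Rightarrow> real) \<Rightarrow> real \<Rightarrow> real" where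
  "Lpar \<alpha> ell = psi \<alpha> ell"

definition phi :: "(real \<Rightarrow> real) \<Rightarrow> real \<Rightarrow> real \<Rightarrow> real" where
  "phi \<alpha> ell = the_inv_into {0..ell} (psi \<alpha>)"

definition beta :: "(real \<Rightarrow> real) \<Rightarrow> real \<Rightarrow> real \<Rightarrow> real" where
  "beta \<alpha> ell t = \<alpha> (phi \<alpha> ell t)"

text \<open>W^{1,infty}((0,L);X), identified with Lipschitz maps on [0,L].\<close>
definition W1inf :: "real \<Rightarrow> (real \<Rightarrow> 'a::metric_space) \<Rightarrow> bool" where
  "W1inf L f \<longleftrightarrow> (\<exists>M. M-lipschitz_on {0..L} f)"

definition sphere_valued :: "real \<Rightarrow> (real \<Rightarrow> 'a::real_normed_vector) \<Rightarrow> bool" where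
  "sphere_valued L f \<longleftrightarrow> (\<forall>t\<in>{0..L}. norm (f t) = 1)"

definition constraintsC ::
  "real \<Rightarrow> (real \<Rightarrow> real) \<Rightarrow> 'a::euclidean_space \<Rightarrow> 'a \<Rightarrow> 'a \<Rightarrow> (real \<Rightarrow> 'a) \<Rightarrow> bool" where
  "constraintsC L \<beta> T1 T2 a \<tau> \<longleftrightarrow>
     \<tau> 0 = T1 \<and> \<tau> L = T2 \<and> ((\<lambda>t. \<beta> t *\<^sub>R \<tau> t) has_integral a) {0..L}"

definition Kinf :: "real \<Rightarrow> (real \<Rightarrow> 'a::real_normed_vector) \<Rightarrow> ereal" where
  "Kinf L \<tau> = esssup (restrict_space lborel {0<..<L})
                  (\<lambda>t. ereal (norm (vector_derivative \<tau> (at t))))"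

definition pseudo_minimiser ::
  "real \<Rightarrow> (real \<Rightarrow> real) \<Rightarrow> 'a::euclidean_space \<Rightarrow> 'a \<Rightarrow> 'a \<Rightarrow> (real \<Rightarrow> 'a) \<Rightarrow> bool" where
  "pseudo_minimiser L \<beta> T1 T2 a \<tau> \<longleftrightarrow>
     W1inf L \<tau> \<and> sphere_valued L \<tau> \<and> constraintsC L \<beta> T1 T2 a \<tau> \<and>
     (\<exists>m::real. \<forall>\<tau>'. W1inf L \<tau>' \<and> sphere_valued L \<tau>' \<and> constraintsC L \<beta> T1 T2 a \<tau>' \<longrightarrow>
        Kinf L \<tau> \<le> Kinf L \<tau>' +
          ereal (m / (2 * L) * integral {0..L} (\<lambda>t. \<beta> t * (norm (\<tau>' t - \<tau> t))\<^sup>2)))"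

end

theory Submission
  imports Defs
begin


lemma vitali_lower:
  fixes g :: "real \<Rightarrow> real"
  assumes mono: "mono g" and cont: "continuous_on UNIV g"
    and S: "S \<in> sets lebesgue" and A: "A \<in> sets lebesgue" and gS: "g ` S \<subseteq> A" and q: "q \<ge> 0"
    and hyp: "\<And>x e. x \<in> S \<Longrightarrow> e > 0 \<Longrightarrow> \<exists>l r. l \<le> x \<and> x \<le> r \<and> l < r \<and> r - l < e \<and> q * (r - l) < g r - g l"
  shows "ennreal q * emeasure lebesgue S \<le> emeasure lebesgue A"
proof (rule ennreal_le_epsilon)
  fix \<epsilon> :: real assume "0 < \<epsilon>"
  obtain U where U: "open U" "A \<subseteq> U" "(U - A) \<in> lmeasurable" "emeasure lebesgue (U - A) < ennreal \<epsilon>"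
    using sets_lebesgue_outer_open[OF A \<open>0<\<epsilon>\<close>] by blast
  have Ul: "U \<in> sets lebesgue" using U(1) by auto
  have "emeasure lebesgue U \<le> emeasure lebesgue A + emeasure lebesgue (U - A)"
    using emeasure_subadditive[of A lebesgue "U - A"] A U by (auto simp: Un_absorb1 Un_Diff_cancel)
  also have "\<dots> \<le> emeasure lebesgue A + ennreal \<epsilon>" using U(4) by (auto intro: add_left_mono)
  finally have Ule: "emeasure lebesgue U \<le> emeasure lebesgue A + ennreal \<epsilon>" .
  define Ov where "Ov = g -` U"
  have "open Ov" unfolding Ov_def using U(1) cont by (simp add: continuous_on_open_vimage)
  define K where "K = {(l,r). l < r \<and> {l..r} \<subseteq> Ov \<and> q * (r - l) < g r - g l}"
  define ctr where "ctr = (\<lambda>i::real\<times>real. (fst i + snd i) / 2)"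
  define rad where "rad = (\<lambda>i::real\<times>real. (snd i - fst i) / 2)"
  have cb: "cball (ctr i) (rad i) = {fst i..snd i}" for i
    by (auto simp: ctr_def rad_def cball_eq_atLeastAtMost field_simps)
  have radpos: "\<And>i. i \<in> K \<Longrightarrow> 0 < rad i" by (auto simp: K_def rad_def)
  have cover: "\<exists>i. i \<in> K \<and> x \<in> cball (ctr i) (rad i) \<and> rad i < d" if "x \<in> S" "0 < d" for x d
  proof -
    have "g x \<in> U" using gS U(2) that(1) by auto
    hence "x \<in> Ov" by (simp add: Ov_def)
    then obtain e0 where e0: "e0 > 0" "ball x e0 \<subseteq> Ov" using \<open>open Ov\<close> open_contains_ball by blast
    have "\<exists>l r. l \<le> x \<and> x \<le> r \<and> l < r \<and> r - l < min e0 (2*d) \<and> q * (r - l) < g r - g l"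
      using hyp[of x "min e0 (2*d)"] e0 that by auto
    then obtain l r where lr: "l \<le> x" "x \<le> r" "l < r" "r - l < min e0 (2*d)" "q * (r - l) < g r - g l"
      by blast
    have "{l..r} \<subseteq> ball x e0" using lr by (auto simp: dist_real_def)
    hence "(l,r) \<in> K" using lr e0 by (auto simp: K_def)
    moreover have "x \<in> cball (ctr (l,r)) (rad (l,r))" using lr by (simp add: cb)
    ultimately show ?thesis using lr by (intro exI[of _ "(l,r)"]) (auto simp: rad_def)
  qed
  obtain C where C: "countable C" "C \<subseteq> K"
     "pairwise (\<lambda>i j. disjnt (cball (ctr i) (rad i)) (cball (ctr j) (rad j))) C"
     "negligible(S - (\<Union>i \<in> C. cball (ctr i) (rad i)))"
    using Vitali_covering_theorem_cballs[of K rad S ctr, OF radpos cover] by blast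
  define I where "I = (\<lambda>i::real\<times>real. {fst i..snd i})"
  define V where "V = (\<lambda>i::real\<times>real. {g (fst i)<..<g (snd i)})"
  have N: "S - (\<Union>i\<in>C. I i) \<in> null_sets lebesgue"
    using C(4) by (simp add: cb I_def negligible_iff_null_sets)
  have disjI: "disjoint_family_on I C"
    using C(3) unfolding disjoint_family_on_def pairwise_def disjnt_def cb I_def by blast
  have disjV: "disjoint_family_on V C"
    unfolding disjoint_family_on_def
  proof (intro ballI impI)
    fix i j assume i0: "i \<in> C" "j \<in> C" "i \<noteq> j"
    obtain l r l' r' where ij: "i = (l,r)" "j = (l',r')" by (cases i, cases j) auto
    have lr: "l < r" "l' < r'" using i0 C(2) ij by (auto simp: K_def)
    have "I i \<inter> I j = {}" using disjI i0 unfolding disjoint_family_on_def by blast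
    hence "{l..r} \<inter> {l'..r'} = {}" by (simp add: I_def ij)
    hence "r < l' \<or> r' < l" using lr by (metis atLeastAtMost_iff disjoint_iff linorder_not_le order.strict_implies_order)
    thus "V i \<inter> V j = {}"
    proof
      assume "r < l'" hence "g r \<le> g l'" using mono by (simp add: monoD)
      thus ?thesis by (auto simp: V_def ij)
    next
      assume "r' < l" hence "g r' \<le> g l" using mono by (simp add: monoD)
      thus ?thesis by (auto simp: V_def ij)
    qed
  qed
  have UI: "(\<Union>i\<in>C. I i) \<in> sets lebesgue"
    by (rule sets.countable_UN'') (use C(1) in \<open>auto simp: I_def\<close>)
  have "emeasure lebesgue S \<le> emeasure lebesgue ((\<Union>i\<in>C. I i) \<union> (S - (\<Union>i\<in>C. I i)))"
    by (rule emeasure_mono) (use N UI S in auto)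
  also have "\<dots> \<le> emeasure lebesgue (\<Union>i\<in>C. I i) + emeasure lebesgue (S - (\<Union>i\<in>C. I i))"
    by (rule emeasure_subadditive) (use N UI S in auto)
  also have "\<dots> = emeasure lebesgue (\<Union>i\<in>C. I i)" using N by (simp add: null_setsD1)
  also have "\<dots> = (\<integral>\<^sup>+i. emeasure lebesgue (I i) \<partial>count_space C)"
    by (rule emeasure_UN_countable) (use C(1) disjI in \<open>auto simp: I_def\<close>)
  finally have Sle: "emeasure lebesgue S \<le> (\<integral>\<^sup>+i. emeasure lebesgue (I i) \<partial>count_space C)" .
  have "ennreal q * emeasure lebesgue S \<le> ennreal q * (\<integral>\<^sup>+i. emeasure lebesgue (I i) \<partial>count_space C)"
    using Sle by (rule mult_left_mono) simp
  also have "\<dots> = (\<integral>\<^sup>+i. ennreal q * emeasure lebesgue (I i) \<partial>count_space C)"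
    by (simp add: nn_integral_cmult)
  also have "\<dots> \<le> (\<integral>\<^sup>+i. emeasure lebesgue (V i) \<partial>count_space C)"
  proof (rule nn_integral_mono)
    fix i assume "i \<in> space (count_space C)"
    hence "i \<in> K" using C(2) by auto
    then obtain l r where i: "i = (l,r)" "l < r" "q * (r - l) < g r - g l" by (auto simp: K_def)
    have "0 \<le> q * (r - l)" using i q by simp
    hence "g l \<le> g r" using i by linarith
    thus "ennreal q * emeasure lebesgue (I i) \<le> emeasure lebesgue (V i)"
      using q i by (simp add: I_def V_def ennreal_mult[symmetric])
  qed
  also have "\<dots> = emeasure lebesgue (\<Union>i\<in>C. V i)"
    by (rule emeasure_UN_countable[symmetric]) (use C(1) disjV in \<open>auto simp: V_def\<close>)
  also have "\<dots> \<le> emeasure lebesgue U"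
  proof (rule emeasure_mono[OF _ Ul])
    show "(\<Union>i\<in>C. V i) \<subseteq> U"
    proof clarify
      fix y l r assume "(l,r) \<in> C" "y \<in> V (l,r)"
      hence lr: "l < r" "{l..r} \<subseteq> Ov" "g l < y" "y < g r" using C(2) by (auto simp: K_def V_def)
      have "\<exists>x\<ge>l. x \<le> r \<and> g x = y"
        by (rule IVT') (use lr cont in \<open>auto intro: continuous_on_subset\<close>)
      then obtain x where "x \<in> {l..r}" "g x = y" by auto
      thus "y \<in> U" using lr(2) by (auto simp: Ov_def)
    qed
  qed
  also have "\<dots> \<le> emeasure lebesgue A + ennreal \<epsilon>" by (rule Ule)
  finally show "ennreal q * emeasure lebesgue S \<le> emeasure lebesgue A + ennreal \<epsilon>" .
qed

lemma vitali_upper: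
  fixes g :: "real \<Rightarrow> real"
  assumes mono: "mono g" and cont: "continuous_on UNIV g" and lip: "B-lipschitz_on UNIV g"
    and S: "S \<in> sets lebesgue" and p: "p \<ge> 0" and "\<epsilon> > 0"
    and hyp: "\<And>x e. x \<in> S \<Longrightarrow> e > 0 \<Longrightarrow> \<exists>l r. l \<le> x \<and> x \<le> r \<and> l < r \<and> r - l < e \<and> g r - g l < p * (r - l)"
  obtains A where "A \<in> sets lebesgue" "g ` S \<subseteq> A"
     "emeasure lebesgue A \<le> ennreal p * (emeasure lebesgue S + ennreal \<epsilon>)"
proof -
  obtain T where T: "open T" "S \<subseteq> T" "(T - S) \<in> lmeasurable" "emeasure lebesgue (T - S) < ennreal \<epsilon>"
    using sets_lebesgue_outer_open[OF S \<open>0<\<epsilon>\<close>] by blast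
  have Tl: "T \<in> sets lebesgue" using T(1) by auto
  have "emeasure lebesgue T \<le> emeasure lebesgue S + emeasure lebesgue (T - S)"
    using emeasure_subadditive[of S lebesgue "T - S"] S T by (auto simp: Un_absorb1 Un_Diff_cancel)
  also have "\<dots> \<le> emeasure lebesgue S + ennreal \<epsilon>" using T(4) by (auto intro: add_left_mono)
  finally have Tle: "emeasure lebesgue T \<le> emeasure lebesgue S + ennreal \<epsilon>" .
  define K where "K = {(l,r). l < r \<and> {l..r} \<subseteq> T \<and> g r - g l < p * (r - l)}"
  define ctr where "ctr = (\<lambda>i::real\<times>real. (fst i + snd i) / 2)"
  define rad where "rad = (\<lambda>i::real\<times>real. (snd i - fst i) / 2)"
  have cb: "cball (ctr i) (rad i) = {fst i..snd i}" for i
    by (auto simp: ctr_def rad_def cball_eq_atLeastAtMost field_simps)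
  have radpos: "\<And>i. i \<in> K \<Longrightarrow> 0 < rad i" by (auto simp: K_def rad_def)
  have cover: "\<exists>i. i \<in> K \<and> x \<in> cball (ctr i) (rad i) \<and> rad i < d" if "x \<in> S" "0 < d" for x d
  proof -
    have "x \<in> T" using T(2) that(1) by auto
    then obtain e0 where e0: "e0 > 0" "ball x e0 \<subseteq> T" using \<open>open T\<close> open_contains_ball by blast
    have "\<exists>l r. l \<le> x \<and> x \<le> r \<and> l < r \<and> r - l < min e0 (2*d) \<and> g r - g l < p * (r - l)"
      using hyp[of x "min e0 (2*d)"] e0 that by auto
    then obtain l r where lr: "l \<le> x" "x \<le> r" "l < r" "r - l < min e0 (2*d)" "g r - g l < p * (r - l)"
      by blast
    have "{l..r} \<subseteq> ball x e0" using lr by (auto simp: dist_real_def)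
    hence "(l,r) \<in> K" using lr e0 by (auto simp: K_def)
    moreover have "x \<in> cball (ctr (l,r)) (rad (l,r))" using lr by (simp add: cb)
    ultimately show ?thesis using lr by (intro exI[of _ "(l,r)"]) (auto simp: rad_def)
  qed
  obtain C where C: "countable C" "C \<subseteq> K"
     "pairwise (\<lambda>i j. disjnt (cball (ctr i) (rad i)) (cball (ctr j) (rad j))) C"
     "negligible(S - (\<Union>i \<in> C. cball (ctr i) (rad i)))"
    using Vitali_covering_theorem_cballs[of K rad S ctr, OF radpos cover] by blast
  define I where "I = (\<lambda>i::real\<times>real. {fst i..snd i})"
  define V where "V = (\<lambda>i::real\<times>real. {g (fst i)<..<g (snd i)})"
  define N where "N = S - (\<Union>i\<in>C. I i)"
  have Nneg: "negligible N"
    using C(4) by (simp add: cb I_def N_def)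
  have disjI: "disjoint_family_on I C"
    using C(3) unfolding disjoint_family_on_def pairwise_def disjnt_def cb I_def by blast
  have disjV: "disjoint_family_on V C"
    unfolding disjoint_family_on_def
  proof (intro ballI impI)
    fix i j assume i0: "i \<in> C" "j \<in> C" "i \<noteq> j"
    obtain l r l' r' where ij: "i = (l,r)" "j = (l',r')" by (cases i, cases j) auto
    have lr: "l < r" "l' < r'" using i0 C(2) ij by (auto simp: K_def)
    have "I i \<inter> I j = {}" using disjI i0 unfolding disjoint_family_on_def by blast
    hence "{l..r} \<inter> {l'..r'} = {}" by (simp add: I_def ij)
    hence "r < l' \<or> r' < l" using lr by (metis atLeastAtMost_iff disjoint_iff linorder_not_le order.strict_implies_order)
    thus "V i \<inter> V j = {}"
    proof
      assume "r < l'" hence "g r \<le> g l'" using mono by (simp add: monoD)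
      thus ?thesis by (auto simp: V_def ij)
    next
      assume "r' < l" hence "g r' \<le> g l" using mono by (simp add: monoD)
      thus ?thesis by (auto simp: V_def ij)
    qed
  qed
  define E where "E = (\<lambda>i. g (fst i)) ` C \<union> (\<lambda>i. g (snd i)) ` C"
  have "countable E" unfolding E_def using C(1) by auto
  hence Eneg: "E \<in> null_sets lebesgue" by (auto intro: null_sets_completionI countable_imp_null_set_lborel)
  have gNneg: "negligible (g ` N)"
  proof (rule negligible_locally_Lipschitz_image[OF _ Nneg])
    fix x assume "x \<in> N"
    show "\<exists>T B. open T \<and> x \<in> T \<and> (\<forall>y \<in> N \<inter> T. norm(g y - g x) \<le> B * norm(y - x))"
      using lipschitz_on_normD[OF lip] by (intro exI[of _ UNIV] exI[of _ B]) auto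
  qed simp
  define A where "A = (\<Union>i\<in>C. V i) \<union> g ` N \<union> E"
  have UV: "(\<Union>i\<in>C. V i) \<in> sets lebesgue"
    by (rule sets.countable_UN'') (use C(1) in \<open>auto simp: V_def\<close>)
  have UI: "(\<Union>i\<in>C. I i) \<in> sets lebesgue"
    by (rule sets.countable_UN'') (use C(1) in \<open>auto simp: I_def\<close>)
  have nulls: "g ` N \<union> E \<in> null_sets lebesgue"
    using gNneg Eneg by (simp add: negligible_iff_null_sets null_sets.Un)
  have Al: "A \<in> sets lebesgue" unfolding A_def Un_assoc using UV null_setsD2[OF nulls] by (rule sets.Un)
  have gSA: "g ` S \<subseteq> A"
  proof
    fix y assume "y \<in> g ` S"
    then obtain x where x: "x \<in> S" "y = g x" by auto
    show "y \<in> A"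
    proof (cases "x \<in> N")
      case True thus ?thesis using x by (auto simp: A_def)
    next
      case False
      then obtain i where i: "i \<in> C" "x \<in> I i" using x by (auto simp: N_def)
      hence "g (fst i) \<le> g x" "g x \<le> g (snd i)" using mono by (auto simp: I_def monoD)
      moreover have "g (fst i) \<in> E" "g (snd i) \<in> E" using i by (auto simp: E_def)
      ultimately show ?thesis using i x
      proof (cases "g x = g (fst i) \<or> g x = g (snd i)")
        case False
        hence "g x \<in> V i" using \<open>g (fst i) \<le> g x\<close> \<open>g x \<le> g (snd i)\<close> by (auto simp: V_def)
        thus ?thesis using i x by (auto simp: A_def)
      qed (auto simp: A_def)
    qed
  qed
  have "emeasure lebesgue A \<le> emeasure lebesgue (\<Union>i\<in>C. V i) + emeasure lebesgue (g ` N \<union> E)"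
    unfolding A_def Un_assoc by (rule emeasure_subadditive) (use UV nulls in auto)
  also have "\<dots> = emeasure lebesgue (\<Union>i\<in>C. V i)" using nulls by (simp add: null_setsD1)
  also have "\<dots> = (\<integral>\<^sup>+i. emeasure lebesgue (V i) \<partial>count_space C)"
    by (rule emeasure_UN_countable) (use C(1) disjV in \<open>auto simp: V_def\<close>)
  also have "\<dots> \<le> (\<integral>\<^sup>+i. ennreal p * emeasure lebesgue (I i) \<partial>count_space C)"
  proof (rule nn_integral_mono)
    fix i assume "i \<in> space (count_space C)"
    hence "i \<in> K" using C(2) by auto
    then obtain l r where i: "i = (l,r)" "l < r" "g r - g l < p * (r - l)" by (auto simp: K_def)
    have "g l \<le> g r" using mono i by (simp add: monoD)
    thus "emeasure lebesgue (V i) \<le> ennreal p * emeasure lebesgue (I i)"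
      using p i by (simp add: I_def V_def ennreal_mult[symmetric])
  qed
  also have "\<dots> = ennreal p * (\<integral>\<^sup>+i. emeasure lebesgue (I i) \<partial>count_space C)"
    by (simp add: nn_integral_cmult)
  also have "(\<integral>\<^sup>+i. emeasure lebesgue (I i) \<partial>count_space C) = emeasure lebesgue (\<Union>i\<in>C. I i)"
    by (rule emeasure_UN_countable[symmetric]) (use C(1) disjI in \<open>auto simp: I_def\<close>)
  also have "emeasure lebesgue (\<Union>i\<in>C. I i) \<le> emeasure lebesgue T"
    by (rule emeasure_mono[OF _ Tl]) (use C(2) in \<open>fastforce simp: K_def I_def\<close>)
  finally have "emeasure lebesgue A \<le> ennreal p * emeasure lebesgue T" by (simp add: mult_left_mono)
  also have "\<dots> \<le> ennreal p * (emeasure lebesgue S + ennreal \<epsilon>)" using Tle by (rule mult_left_mono) simp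
  finally show ?thesis using that Al gSA by blast
qed

lemma dini_null:
  fixes g :: "real \<Rightarrow> real"
  assumes mono: "mono g" and cont: "continuous_on UNIV g" and lip: "B-lipschitz_on UNIV g"
    and S: "S \<in> sets lebesgue" and fin: "emeasure lebesgue S < \<infinity>" and pq: "0 \<le> p" "p < q"
    and hl: "\<And>x e. x \<in> S \<Longrightarrow> e > 0 \<Longrightarrow> \<exists>l r. l \<le> x \<and> x \<le> r \<and> l < r \<and> r - l < e \<and> g r - g l < p * (r - l)"
    and hh: "\<And>x e. x \<in> S \<Longrightarrow> e > 0 \<Longrightarrow> \<exists>l r. l \<le> x \<and> x \<le> r \<and> l < r \<and> r - l < e \<and> q * (r - l) < g r - g l"
  shows "S \<in> null_sets lebesgue"
proof -
  obtain m where m: "emeasure lebesgue S = ennreal m" "m \<ge> 0" using fin by (cases "emeasure lebesgue S") auto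
  have key: "q * m \<le> p * (m + \<epsilon>)" if eps: "\<epsilon> > 0" for \<epsilon>
  proof -
    obtain A where A: "A \<in> sets lebesgue" "g ` S \<subseteq> A"
       "emeasure lebesgue A \<le> ennreal p * (emeasure lebesgue S + ennreal \<epsilon>)"
      using vitali_upper[OF mono cont lip S pq(1) eps hl] by blast
    have "ennreal q * emeasure lebesgue S \<le> emeasure lebesgue A"
      using vitali_lower[OF mono cont S A(1,2) _ hh] pq by simp
    with A(3) have "ennreal (q * m) \<le> ennreal (p * (m + \<epsilon>))"
      using m pq eps by (simp add: ennreal_mult ennreal_plus[symmetric] del: ennreal_plus)
    thus ?thesis using pq m eps by (subst (asm) ennreal_le_iff) auto
  qed
  have "q * m \<le> p * m"
  proof (rule field_le_epsilon)
    fix e :: real assume e: "e > 0"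
    show "q * m \<le> p * m + e"
    proof (cases "p = 0")
      case True thus ?thesis using key[of 1] e by simp
    next
      case False
      hence "p > 0" using pq by simp
      have "q * m \<le> p * (m + e / p)" using key[of "e/p"] e \<open>p > 0\<close> by simp
      also have "\<dots> = p * m + e" using \<open>p > 0\<close> by (simp add: field_simps)
      finally show ?thesis .
    qed
  qed
  hence "(q - p) * m \<le> 0" by (simp add: algebra_simps)
  hence "m \<le> 0" using pq by (simp add: mult_le_0_iff)
  hence "m = 0" using m by simp
  thus ?thesis using m S by (simp add: null_sets_def)
qed

definition lowset :: "(real \<Rightarrow> real) \<Rightarrow> real \<Rightarrow> nat \<Rightarrow> real set" where
  "lowset g p n = (\<Union>i\<in>{(l,r). l \<in> \<rat> \<and> r \<in> \<rat> \<and> l < r \<and> r - l < 1 / Suc n \<and> g r - g l < p * (r - l)}.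
        {fst i<..<snd i})"

definition highset :: "(real \<Rightarrow> real) \<Rightarrow> real \<Rightarrow> nat \<Rightarrow> real set" where
  "highset g q n = (\<Union>i\<in>{(l,r). l \<in> \<rat> \<and> r \<in> \<rat> \<and> l < r \<and> r - l < 1 / Suc n \<and> q * (r - l) < g r - g l}.
        {fst i<..<snd i})"

definition dset :: "(real \<Rightarrow> real) \<Rightarrow> real \<Rightarrow> real \<Rightarrow> real set" where
  "dset g p q = (\<Inter>n. lowset g p n) \<inter> (\<Inter>n. highset g q n)"

lemma dset_borel: "dset g p q \<in> sets borel"
proof -
  have "lowset g p n \<in> sets borel" for n unfolding lowset_def by (intro borel_open) auto
  moreover have "highset g q n \<in> sets borel" for n unfolding highset_def by (intro borel_open) auto
  ultimately show ?thesis unfolding dset_def by (intro sets.Int sets.countable_INT) auto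
qed

lemma small_nat: "e > (0::real) \<Longrightarrow> \<exists>n. 1 / real (Suc n) < e"
  by (metis add.commute nat_approx_posE of_nat_Suc one_add_one plus_1_eq_Suc)

lemma dset_low:
  assumes "x \<in> dset g p q" "e > 0"
  shows "\<exists>l r. l \<le> x \<and> x \<le> r \<and> l < r \<and> r - l < e \<and> g r - g l < p * (r - l)"
proof -
  obtain n where n: "1 / real (Suc n) < e" using small_nat[OF assms(2)] by blast
  have "x \<in> lowset g p n" using assms(1) by (auto simp: dset_def)
  then obtain l r where "l < r" "r - l < 1 / Suc n" "g r - g l < p * (r - l)" "l < x" "x < r"
    unfolding lowset_def by auto
  thus ?thesis using n by (intro exI[of _ l] exI[of _ r]) auto
qed

lemma dset_high:
  assumes "x \<in> dset g p q" "e > 0"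
  shows "\<exists>l r. l \<le> x \<and> x \<le> r \<and> l < r \<and> r - l < e \<and> q * (r - l) < g r - g l"
proof -
  obtain n where n: "1 / real (Suc n) < e" using small_nat[OF assms(2)] by blast
  have "x \<in> highset g q n" using assms(1) by (auto simp: dset_def)
  then obtain l r where "l < r" "r - l < 1 / Suc n" "q * (r - l) < g r - g l" "l < x" "x < r"
    unfolding highset_def by auto
  thus ?thesis using n by (intro exI[of _ l] exI[of _ r]) auto
qed

lemma dset_null:
  fixes g :: "real \<Rightarrow> real"
  assumes mono: "mono g" and cont: "continuous_on UNIV g" and lip: "B-lipschitz_on UNIV g"
    and pq: "0 \<le> p" "p < q"
  shows "dset g p q \<in> null_sets lebesgue"
proof -
  have "dset g p q \<inter> {-real R<..<real R} \<in> null_sets lebesgue" for R :: nat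
  proof (rule dini_null[OF mono cont lip _ _ pq])
    show "dset g p q \<inter> {-real R<..<real R} \<in> sets lebesgue"
      using dset_borel by (intro sets.Int) auto
    have "emeasure lebesgue (dset g p q \<inter> {-real R<..<real R}) \<le> emeasure lebesgue {-real R<..<real R}"
      by (rule emeasure_mono) auto
    also have "\<dots> < \<infinity>" by simp
    finally show "emeasure lebesgue (dset g p q \<inter> {-real R<..<real R}) < \<infinity>" .
  next
    fix x e assume "x \<in> dset g p q \<inter> {-real R<..<real R}" "(0::real) < e"
    thus "\<exists>l r. l \<le> x \<and> x \<le> r \<and> l < r \<and> r - l < e \<and> g r - g l < p * (r - l)"
      using dset_low by blast
  next
    fix x e assume "x \<in> dset g p q \<inter> {-real R<..<real R}" "(0::real) < e"
    thus "\<exists>l r. l \<le> x \<and> x \<le> r \<and> l < r \<and> r - l < e \<and> q * (r - l) < g r - g l"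
      using dset_high by blast
  qed
  hence "(\<Union>R. dset g p q \<inter> {-real R<..<real R}) \<in> null_sets lebesgue" by blast
  moreover have "(\<Union>R. dset g p q \<inter> {-real R<..<real R}) = dset g p q"
  proof safe
    fix x assume "x \<in> dset g p q"
    obtain R :: nat where "\<bar>x\<bar> < R" using reals_Archimedean2 by blast
    hence "x \<in> dset g p q \<inter> {-real R<..<real R}" using \<open>x \<in> dset g p q\<close> by auto
    thus "x \<in> (\<Union>R. dset g p q \<inter> {-real R<..<real R})" by blast
  qed
  ultimately show ?thesis by simp
qed

lemma mono_slope_nonneg:
  fixes g :: "real \<Rightarrow> real"
  assumes "mono g" "h \<noteq> 0"
  shows "0 \<le> (g (x + h) - g x) / h"
proof (cases "h > 0")
  case True
  hence "g x \<le> g (x + h)" using assms(1) by (simp add: monoD)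
  thus ?thesis using True by simp
next
  case False
  hence "h < 0" using assms(2) by simp
  hence "g (x + h) \<le> g x" using assms(1) by (simp add: monoD)
  thus ?thesis using \<open>h < 0\<close> by (simp add: divide_nonpos_neg)
qed

lemma lip_slope_le:
  fixes g :: "real \<Rightarrow> real"
  assumes "B-lipschitz_on UNIV g" "h \<noteq> 0"
  shows "(g (x + h) - g x) / h \<le> B"
proof -
  have "\<bar>g (x + h) - g x\<bar> \<le> B * \<bar>h\<bar>"
    using lipschitz_on_normD[OF assms(1), of "x+h" x] by simp
  hence "\<bar>(g (x + h) - g x) / h\<bar> \<le> B" using assms(2) by (simp add: abs_divide divide_le_eq)
  thus ?thesis by (metis abs_le_D1)
qed

lemma slope_interval:
  fixes g :: "real \<Rightarrow> real"
  assumes "h \<noteq> 0"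
  shows "g (max x (x+h)) - g (min x (x+h)) = (g (x + h) - g x) / h * \<bar>h\<bar>"
  using assms by (cases "h > 0") (auto simp: max_def min_def field_simps)

lemma sum_small:
  fixes k d \<delta> :: real assumes "k>0" "d < 1/(2*k)" "\<delta> \<le> 1/(4*k)" shows "d + 2*\<delta> \<le> 1/k"
proof -
  have "2*\<delta> \<le> 2*(1/(4*k))" using assms by simp
  also have "\<dots> = 1/(2*k)" by simp
  finally have "2*\<delta> \<le> 1/(2*k)" .
  moreover have "1/(2*k) + 1/(2*k) = 1/k" by simp
  ultimately show ?thesis using assms by linarith
qed

lemma perturb_low:
  fixes g :: "real \<Rightarrow> real"
  assumes mono: "mono g" and lip: "B-lipschitz_on UNIV g" and h: "h \<noteq> 0" "\<bar>h\<bar> < 1 / (2 * Suc n)"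
    and s: "(g (x + h) - g x) / h < p" and pp: "p < p'"
  shows "x \<in> lowset g p' n"
proof -
  define sl where "sl = (g (x + h) - g x) / h"
  define l0 where "l0 = min x (x+h)"
  define r0 where "r0 = max x (x+h)"
  define d where "d = \<bar>h\<bar>"
  have B0: "B \<ge> 0" using lip by (rule lipschitz_on_nonneg)
  have d0: "d > 0" using h by (simp add: d_def)
  have rl0: "r0 - l0 = d" by (auto simp: r0_def l0_def d_def max_def min_def)
  have gd: "g r0 - g l0 = sl * d" using slope_interval[OF h(1), of g x] by (simp add: r0_def l0_def sl_def d_def)
  have sl0: "sl \<ge> 0" using mono_slope_nonneg[OF mono h(1)] by (simp add: sl_def)
  define \<delta> where "\<delta> = min (1 / (4 * real (Suc n))) ((p' - p) * d / (2 * B + 2))"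
  have \<delta>0: "\<delta> > 0" using d0 pp B0 by (simp add: \<delta>_def)
  obtain l where l: "l \<in> \<rat>" "l0 - \<delta> < l" "l < l0" using Rats_dense_in_real[of "l0 - \<delta>" l0] \<delta>0 by auto
  obtain r where r: "r \<in> \<rat>" "r0 < r" "r < r0 + \<delta>" using Rats_dense_in_real[of r0 "r0 + \<delta>"] \<delta>0 by auto
  have "g r - g r0 \<le> B * (r - r0)" using lipschitz_on_normD[OF lip, of r r0] r by simp
  moreover have "g l0 - g l \<le> B * (l0 - l)" using lipschitz_on_normD[OF lip, of l0 l] l by simp
  ultimately have "g r - g l \<le> sl * d + B * (r - r0) + B * (l0 - l)" using gd by linarith
  also have "\<dots> \<le> sl * d + 2 * B * \<delta>"
  proof -
    have "B * (r - r0) \<le> B * \<delta>" using r B0 by (intro mult_left_mono) auto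
    moreover have "B * (l0 - l) \<le> B * \<delta>" using l B0 by (intro mult_left_mono) auto
    ultimately show ?thesis by simp
  qed
  also have "2 * B * \<delta> \<le> (p' - p) * d"
  proof -
    have "(2*B+2) * \<delta> \<le> (2*B+2) * ((p' - p) * d / (2 * B + 2))"
      using B0 by (intro mult_left_mono) (auto simp: \<delta>_def)
    also have "\<dots> = (p' - p) * d" using B0 by simp
    finally have "(2*B+2) * \<delta> \<le> (p' - p) * d" .
    moreover have "2 * B * \<delta> \<le> (2*B+2) * \<delta>" using \<delta>0 by (simp add: distrib_right)
    ultimately show ?thesis by linarith
  qed
  moreover have "sl * d < p * d" using s d0 unfolding sl_def by (rule mult_strict_right_mono)
  moreover have "p' * d = p * d + (p' - p) * d" by (simp add: algebra_simps)
  ultimately have "g r - g l < p' * d" by linarith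
  also have "p' * d \<le> p' * (r - l)"
  proof (rule mult_left_mono)
    show "d \<le> r - l" using r l rl0 by simp
    show "0 \<le> p'" using sl0 s pp by (simp add: sl_def)
  qed
  finally have lt: "g r - g l < p' * (r - l)" .
  have "r - l < d + 2 * \<delta>" using r l rl0 by simp
  also have "\<dots> \<le> 1 / Suc n"
  proof -
    have "d < 1 / (2 * real (Suc n))" using h by (simp add: d_def)
    moreover have "\<delta> \<le> 1 / (4 * real (Suc n))" by (simp add: \<delta>_def)
    ultimately show ?thesis using sum_small[of "real (Suc n)" d \<delta>] by simp
  qed
  finally have "r - l < 1 / Suc n" .
  moreover have "l < x" "x < r" using l r by (auto simp: l0_def r0_def)
  ultimately show ?thesis unfolding lowset_def using l r lt rl0 d0
    by (intro UN_I[of "(l,r)"]) auto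
qed

lemma perturb_high:
  fixes g :: "real \<Rightarrow> real"
  assumes mono: "mono g" and h: "h \<noteq> 0" "\<bar>h\<bar> < 1 / (2 * Suc n)"
    and s: "q < (g (x + h) - g x) / h" and qq: "q' < q"
  shows "x \<in> highset g q' n"
proof -
  define sl where "sl = (g (x + h) - g x) / h"
  define l0 where "l0 = min x (x+h)"
  define r0 where "r0 = max x (x+h)"
  define d where "d = \<bar>h\<bar>"
  have d0: "d > 0" using h by (simp add: d_def)
  have rl0: "r0 - l0 = d" by (auto simp: r0_def l0_def d_def max_def min_def)
  have gd: "g r0 - g l0 = sl * d" using slope_interval[OF h(1), of g x] by (simp add: r0_def l0_def sl_def d_def)
  define \<delta> where "\<delta> = min (1 / (4 * real (Suc n))) ((q - q') * d / (2 * \<bar>q'\<bar> + 2))"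
  have \<delta>0: "\<delta> > 0" using d0 qq by (simp add: \<delta>_def)
  obtain l where l: "l \<in> \<rat>" "l0 - \<delta> < l" "l < l0" using Rats_dense_in_real[of "l0 - \<delta>" l0] \<delta>0 by auto
  obtain r where r: "r \<in> \<rat>" "r0 < r" "r < r0 + \<delta>" using Rats_dense_in_real[of r0 "r0 + \<delta>"] \<delta>0 by auto
  have "g r0 \<le> g r" "g l \<le> g l0" using mono r l by (auto simp: monoD)
  hence ge: "sl * d \<le> g r - g l" using gd by linarith
  have "q' * (r - l) = q' * d + q' * (r - l - d)" by (simp add: algebra_simps)
  also have "q' * (r - l - d) \<le> \<bar>q'\<bar> * (2 * \<delta>)"
  proof -
    have "q' * (r - l - d) \<le> \<bar>q'\<bar> * (r - l - d)" using r l rl0 by (intro mult_right_mono) auto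
    also have "\<dots> \<le> \<bar>q'\<bar> * (2 * \<delta>)" using r l rl0 by (intro mult_left_mono) auto
    finally show ?thesis .
  qed
  also have "\<bar>q'\<bar> * (2 * \<delta>) \<le> (q - q') * d"
  proof -
    have "(2*\<bar>q'\<bar>+2) * \<delta> \<le> (2*\<bar>q'\<bar>+2) * ((q - q') * d / (2 * \<bar>q'\<bar> + 2))"
      by (intro mult_left_mono) (auto simp: \<delta>_def)
    also have "\<dots> = (q - q') * d" by simp
    finally have "(2*\<bar>q'\<bar>+2) * \<delta> \<le> (q - q') * d" .
    moreover have "\<bar>q'\<bar> * (2 * \<delta>) \<le> (2*\<bar>q'\<bar>+2) * \<delta>" using \<delta>0 by (simp add: distrib_right)
    ultimately show ?thesis by linarith
  qed
  moreover have "q * d < sl * d" using s d0 unfolding sl_def by (rule mult_strict_right_mono)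
  moreover have "q' * d + (q - q') * d = q * d" by (simp add: algebra_simps)
  ultimately have lt: "q' * (r - l) < g r - g l" using ge by linarith
  have "r - l < d + 2 * \<delta>" using r l rl0 by simp
  also have "\<dots> \<le> 1 / Suc n"
  proof -
    have "d < 1 / (2 * real (Suc n))" using h by (simp add: d_def)
    moreover have "\<delta> \<le> 1 / (4 * real (Suc n))" by (simp add: \<delta>_def)
    ultimately show ?thesis using sum_small[of "real (Suc n)" d \<delta>] by simp
  qed
  finally have "r - l < 1 / Suc n" .
  moreover have "l < x" "x < r" using l r by (auto simp: l0_def r0_def)
  ultimately show ?thesis unfolding highset_def using l r lt rl0 d0
    by (intro UN_I[of "(l,r)"]) auto
qed

lemma mono_lip_diff:
  fixes g :: "real \<Rightarrow> real"
  assumes mono: "mono g" and lip: "B-lipschitz_on UNIV g"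
    and nd: "\<And>p q. p \<in> \<rat> \<Longrightarrow> q \<in> \<rat> \<Longrightarrow> 0 \<le> p \<Longrightarrow> p < q \<Longrightarrow> x \<notin> dset g p q"
  shows "g differentiable (at x)"
proof -
  define s where "s = (\<lambda>h. (g (x + h) - g x) / h)"
  have s0: "h \<noteq> 0 \<Longrightarrow> 0 \<le> s h" for h using mono_slope_nonneg[OF mono] by (simp add: s_def)
  have sB: "h \<noteq> 0 \<Longrightarrow> s h \<le> B" for h using lip_slope_le[OF lip] by (simp add: s_def)
  define FL where "FL = (\<lambda>p. \<forall>e>0. \<exists>h. h \<noteq> 0 \<and> \<bar>h\<bar> < e \<and> s h < p)"
  define FH where "FH = (\<lambda>q. \<forall>e>0. \<exists>h. h \<noteq> 0 \<and> \<bar>h\<bar> < e \<and> q < s h)"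
  have noboth: False if H: "FL p" "FH q" "p < q" for p q
  proof -
    obtain p' where p': "p' \<in> \<rat>" "p < p'" "p' < (p + q) / 2" using Rats_dense_in_real[of p "(p+q)/2"] H(3) by auto
    obtain q' where q': "q' \<in> \<rat>" "(p + q) / 2 < q'" "q' < q" using Rats_dense_in_real[of "(p+q)/2" q] H(3) by auto
    have "\<exists>h. h \<noteq> 0 \<and> \<bar>h\<bar> < 1 \<and> s h < p" using H(1) unfolding FL_def by simp
    then obtain h0 where "h0 \<noteq> 0" "s h0 < p" by blast
    hence "0 < p" using s0 by force
    have "x \<in> lowset g p' n" for n
    proof -
      have "(0::real) < 1 / (2 * Suc n)" by simp
      then obtain h where "h \<noteq> 0" "\<bar>h\<bar> < 1 / (2 * Suc n)" "s h < p" using H(1) unfolding FL_def by blast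
      thus ?thesis using perturb_low[OF mono lip, of h n x p p'] p' by (simp add: s_def)
    qed
    moreover have "x \<in> highset g q' n" for n
    proof -
      have "(0::real) < 1 / (2 * Suc n)" by simp
      then obtain h where "h \<noteq> 0" "\<bar>h\<bar> < 1 / (2 * Suc n)" "q < s h" using H(2) unfolding FH_def by blast
      thus ?thesis using perturb_high[OF mono, of h n q x q'] q' by (simp add: s_def)
    qed
    ultimately have "x \<in> dset g p' q'" by (simp add: dset_def)
    moreover have "0 \<le> p'" "p' < q'" using p' q' \<open>0 < p\<close> by auto
    ultimately show False using nd[OF p'(1) q'(1)] by blast
  qed
  define P where "P = {p. FL p}"
  have FLmono: "FL p \<Longrightarrow> p \<le> p' \<Longrightarrow> FL p'" for p p' unfolding FL_def by (meson less_le_trans)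
  have "FL (B + 1)" unfolding FL_def
  proof (intro allI impI)
    fix e :: real assume "e > 0"
    thus "\<exists>h. h \<noteq> 0 \<and> \<bar>h\<bar> < e \<and> s h < B + 1" using sB[of "e/2"] by (intro exI[of _ "e/2"]) auto
  qed
  hence Pne: "P \<noteq> {}" by (auto simp: P_def)
  have FLpos: "0 \<le> p" if "FL p" for p
  proof -
    have "\<exists>h. h \<noteq> 0 \<and> \<bar>h\<bar> < 1 \<and> s h < p" using that unfolding FL_def by simp
    then obtain h0 where "h0 \<noteq> 0" "s h0 < p" by blast
    thus ?thesis using s0[of h0] by simp
  qed
  have Pbdd: "bdd_below P" unfolding P_def using FLpos by (intro bdd_belowI[of _ 0]) auto
  define lo where "lo = Inf P"
  have lim: "s \<midarrow>0\<rightarrow> lo"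
    unfolding LIM_eq
  proof (intro allI impI)
    fix r :: real assume r: "r > 0"
    have "\<not> FL (lo - r/2)"
    proof
      assume "FL (lo - r/2)"
      hence "lo \<le> lo - r/2" unfolding lo_def using Pbdd by (intro cInf_lower) (auto simp: P_def)
      thus False using r by simp
    qed
    hence "\<exists>e1>0. \<forall>h. h \<noteq> 0 \<and> \<bar>h\<bar> < e1 \<longrightarrow> lo - r/2 \<le> s h"
      unfolding FL_def by (force simp: not_less)
    then obtain e1 where e1: "e1 > 0" "\<And>h. h \<noteq> 0 \<Longrightarrow> \<bar>h\<bar> < e1 \<Longrightarrow> lo - r/2 \<le> s h"
      by blast
    obtain p where p: "p \<in> P" "p < lo + r/2"
      using cInf_lessD[OF Pne, of "lo + r/2"] r by (auto simp: lo_def)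
    have "\<not> FH (lo + r/2)" using noboth[of p "lo + r/2"] p by (auto simp: P_def)
    hence "\<exists>e2>0. \<forall>h. h \<noteq> 0 \<and> \<bar>h\<bar> < e2 \<longrightarrow> s h \<le> lo + r/2"
      unfolding FH_def by (force simp: not_less)
    then obtain e2 where e2: "e2 > 0" "\<And>h. h \<noteq> 0 \<Longrightarrow> \<bar>h\<bar> < e2 \<Longrightarrow> s h \<le> lo + r/2"
      by blast
    show "\<exists>sd>0. \<forall>h. h \<noteq> 0 \<and> norm (h - 0) < sd \<longrightarrow> norm (s h - lo) < r"
    proof (intro exI[of _ "min e1 e2"] conjI allI impI)
      fix h :: real assume "h \<noteq> 0 \<and> norm (h - 0) < min e1 e2"
      hence "lo - r/2 \<le> s h" "s h \<le> lo + r/2" using e1 e2 by auto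
      thus "norm (s h - lo) < r" using r by simp
    qed (use e1 e2 in auto)
  qed
  hence "DERIV g x :> lo" unfolding DERIV_def s_def .
  thus ?thesis using real_differentiable_def by blast
qed

lemma lip_real_ae_diff:
  fixes f :: "real \<Rightarrow> real"
  assumes lip: "M-lipschitz_on UNIV f"
  shows "{x. \<not> f differentiable (at x)} \<in> null_sets lebesgue"
proof -
  have M0: "M \<ge> 0" using lip by (rule lipschitz_on_nonneg)
  define g where "g = (\<lambda>x. f x + M * x)"
  have mono: "mono g"
  proof (rule monoI)
    fix x y :: real assume "x \<le> y"
    have "\<bar>f y - f x\<bar> \<le> M * \<bar>y - x\<bar>" using lipschitz_on_normD[OF lip, of y x] by simp
    thus "g x \<le> g y" using \<open>x \<le> y\<close> by (simp add: g_def abs_le_iff algebra_simps)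
  qed
  have glip: "(2*M)-lipschitz_on UNIV g"
  proof (rule lipschitz_onI)
    fix x y :: real
    have "\<bar>f x - f y\<bar> \<le> M * \<bar>x - y\<bar>" using lipschitz_on_normD[OF lip, of x y] by simp
    moreover have "\<bar>M * x - M * y\<bar> = M * \<bar>x - y\<bar>"
    proof -
      have "M * x - M * y = M * (x - y)" by (simp add: algebra_simps)
      thus ?thesis using M0 by (simp add: abs_mult)
    qed
    ultimately show "dist (g x) (g y) \<le> 2 * M * dist x y"
      by (simp add: g_def dist_real_def)
  qed (use M0 in simp)
  define I where "I = {(p::real,q::real). p \<in> \<rat> \<and> q \<in> \<rat> \<and> 0 \<le> p \<and> p < q}"
  have "countable (\<rat> \<times> \<rat> :: (real \<times> real) set)" using countable_rat by blast
  moreover have "I \<subseteq> \<rat> \<times> \<rat>" by (auto simp: I_def)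
  ultimately have cI: "countable I" using countable_subset by blast
  have gcont: "continuous_on UNIV g" using glip by (rule lipschitz_on_continuous_on)
  have "(\<Union>i\<in>I. dset g (fst i) (snd i)) \<in> null_sets lebesgue"
  proof (rule null_sets_UN'[OF cI])
    fix i assume "i \<in> I"
    thus "dset g (fst i) (snd i) \<in> null_sets lebesgue"
      by (intro dset_null[OF mono gcont glip]) (auto simp: I_def)
  qed
  moreover have "{x. \<not> f differentiable (at x)} \<subseteq> (\<Union>i\<in>I. dset g (fst i) (snd i))"
  proof
    fix x assume "x \<in> {x. \<not> f differentiable (at x)}"
    hence nf: "\<not> f differentiable (at x)" by simp
    have "\<not> g differentiable (at x)"
    proof
      assume "g differentiable (at x)"
      hence "(\<lambda>x. g x - M * x) differentiable (at x)" by (intro differentiable_diff) auto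
      thus False using nf by (simp add: g_def)
    qed
    hence "\<exists>p q. p \<in> \<rat> \<and> q \<in> \<rat> \<and> 0 \<le> p \<and> p < q \<and> x \<in> dset g p q"
      using mono_lip_diff[OF mono glip, of x] by metis
    then obtain p q where "p \<in> \<rat>" "q \<in> \<rat>" "0 \<le> p" "p < q" "x \<in> dset g p q"
      by blast
    thus "x \<in> (\<Union>i\<in>I. dset g (fst i) (snd i))" by (intro UN_I[of "(p,q)"]) (auto simp: I_def)
  qed
  ultimately show ?thesis by (rule null_sets_completion_subset[rotated])
qed

lemma lip_vec_ae_diff:
  fixes f :: "real \<Rightarrow> 'a::euclidean_space"
  assumes lip: "M-lipschitz_on UNIV f"
  shows "{x. \<not> f differentiable (at x)} \<in> null_sets lebesgue"
proof -
  have li: "M-lipschitz_on UNIV (\<lambda>x. f x \<bullet> i)" if "i \<in> Basis" for i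
  proof (rule lipschitz_onI)
    fix x y :: real
    have "\<bar>(f x - f y) \<bullet> i\<bar> \<le> norm (f x - f y)" using that by (rule Basis_le_norm)
    also have "\<dots> \<le> M * \<bar>x - y\<bar>" using lipschitz_on_normD[OF lip, of x y] by simp
    finally show "dist (f x \<bullet> i) (f y \<bullet> i) \<le> M * dist x y" by (simp add: dist_real_def inner_diff_left)
  qed (use lip lipschitz_on_nonneg in blast)
  have "(\<Union>i\<in>Basis. {x. \<not> (\<lambda>x. f x \<bullet> i) differentiable (at x)}) \<in> null_sets lebesgue"
    by (rule null_sets_UN'[OF countable_finite[OF finite_Basis]]) (rule lip_real_ae_diff[OF li])
  moreover have "{x. \<not> f differentiable (at x)} \<subseteq> (\<Union>i\<in>Basis. {x. \<not> (\<lambda>x. f x \<bullet> i) differentiable (at x)})"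
  proof
    fix x assume "x \<in> {x. \<not> f differentiable (at x)}"
    then obtain i where "i \<in> Basis" "\<not> (\<lambda>x. f x \<bullet> i) differentiable (at x)"
      using differentiable_componentwise_within[of f x UNIV] by auto
    thus "x \<in> (\<Union>i\<in>Basis. {x. \<not> (\<lambda>x. f x \<bullet> i) differentiable (at x)})" by blast
  qed
  ultimately show ?thesis by (rule null_sets_completion_subset[rotated])
qed



lemma deriv_seq:
  fixes g :: "real \<Rightarrow> real"
  assumes "(g has_real_derivative D) (at t)"
  shows "(\<lambda>k. (g (t + inverse (real (Suc k))) - g t) / inverse (real (Suc k))) \<longlonglongrightarrow> D"
proof -
  have "(\<lambda>h. (g (t + h) - g t) / h) \<midarrow>0\<rightarrow> D" using assms by (simp add: DERIV_def)
  hence A: "\<forall>S. (\<forall>n. S n \<noteq> 0) \<and> S \<longlonglongrightarrow> 0 \<longrightarrow> (\<lambda>n. (g (t + S n) - g t) / S n) \<longlonglongrightarrow> D"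
    by (simp flip: LIMSEQ_SEQ_conv)
  have "(\<forall>n. inverse (real (Suc n)) \<noteq> 0) \<and> (\<lambda>n. inverse (real (Suc n))) \<longlonglongrightarrow> 0"
    using LIMSEQ_inverse_real_of_nat by simp
  moreover from A have "(\<forall>n. inverse (real (Suc n)) \<noteq> 0) \<and> (\<lambda>n. inverse (real (Suc n))) \<longlonglongrightarrow> 0 \<longrightarrow>
      (\<lambda>n. (g (t + inverse (real (Suc n))) - g t) / inverse (real (Suc n))) \<longlonglongrightarrow> D" by (rule spec)
  ultimately show ?thesis by blast
qed

lemma lip_ftc:
  fixes g g' :: "real \<Rightarrow> real"
  assumes lip: "M-lipschitz_on UNIV g" and ab: "a \<le> b"
    and N: "negligible N" and der: "\<And>t. t \<in> {a..b} - N \<Longrightarrow> (g has_real_derivative g' t) (at t)"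
  shows "(g' has_integral (g b - g a)) {a..b}"
proof -
  have cont: "continuous_on UNIV g" using lip by (rule lipschitz_on_continuous_on)
  define h where "h = (\<lambda>k::nat. inverse (real (Suc k)))"
  have h0: "0 < h k" "h k \<le> 1" for k by (auto simp: h_def inverse_le_1_iff)
  define D where "D = (\<lambda>k t. (g (t + h k) - g t) / h k)"
  define S where "S = {a..b} - N"
  have negS1: "negligible {x \<in> {a..b} - S. f x \<noteq> 0}" for f :: "real \<Rightarrow> real"
    by (rule negligible_subset[OF N]) (auto simp: S_def)
  have negS2: "negligible {x \<in> S - {a..b}. f x \<noteq> 0}" for f :: "real \<Rightarrow> real"
  proof -
    have "{x \<in> S - {a..b}. f x \<noteq> 0} = {}" by (auto simp: S_def)
    thus ?thesis by (metis negligible_empty)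
  qed
  have Dcont: "continuous_on UNIV (D k)" for k
    unfolding D_def using h0[of k] by (intro continuous_intros continuous_on_compose2[OF cont]) auto
  have DintI: "D k integrable_on {a..b}" for k
    by (rule integrable_continuous_interval) (rule continuous_on_subset[OF Dcont], simp)
  have DintS: "D k integrable_on S" for k by (rule integrable_spike_set[OF DintI negS1 negS2])
  have Dbound: "norm (D k t) \<le> M" for k t
  proof -
    have "\<bar>g (t + h k) - g t\<bar> \<le> M * \<bar>h k\<bar>" using lipschitz_on_normD[OF lip, of "t + h k" t] by simp
    thus ?thesis using h0[of k] by (simp add: D_def abs_divide divide_le_eq)
  qed
  have Mint: "(\<lambda>t. M) integrable_on S"
    by (rule integrable_spike_set[OF _ negS1 negS2]) (rule integrable_const_ivl)
  have conv: "(\<lambda>k. D k t) \<longlonglongrightarrow> g' t" if "t \<in> S" for t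
    using deriv_seq[OF der[of t]] that by (simp add: D_def h_def S_def)
  have g'S: "g' integrable_on S" and lim1: "(\<lambda>k. integral S (D k)) \<longlonglongrightarrow> integral S g'"
    using dominated_convergence[of D S "\<lambda>t. M" g', OF DintS Mint _ conv] Dbound by auto
  define c where "c = a - 1"
  define G where "G = (\<lambda>x. integral {c..x} g)"
  have Gder: "(G has_real_derivative g y) (at y)" if "y \<in> {c<..<b+2}" for y
  proof -
    have "((\<lambda>u. integral {c..u} g) has_vector_derivative g y) (at y within {c..b+2})"
      by (rule integral_has_vector_derivative) (use cont that in \<open>auto intro: continuous_on_subset\<close>)
    moreover have "at y within {c..b+2} = at y"
      by (rule at_within_interior) (use that in auto)
    ultimately show ?thesis by (simp add: G_def has_real_derivative_iff_has_vector_derivative)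
  qed
  have Dint: "integral {a..b} (D k) = ((G (b + h k) - G b) - (G (a + h k) - G a)) / h k" for k
  proof -
    have "((\<lambda>t. (g (t + h k) - g t) / h k) has_integral ((G (b + h k) - G b) / h k - (G (a + h k) - G a) / h k)) {a..b}"
    proof -
      have "((\<lambda>t. (g (t + h k) - g t) / h k) has_integral
             ((\<lambda>t. (G (t + h k) - G t) / h k) b - (\<lambda>t. (G (t + h k) - G t) / h k) a)) {a..b}"
      proof (rule fundamental_theorem_of_calculus[OF ab])
        fix t assume t: "t \<in> {a..b}"
        have "(G has_real_derivative g (t + h k)) (at (t + h k))"
          using Gder[of "t + h k"] t h0[of k] by (auto simp: c_def)
        hence d1: "((\<lambda>t. G (t + h k)) has_real_derivative g (t + h k)) (at t)"
          by (simp add: DERIV_shift)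
        have d2: "(G has_real_derivative g t) (at t)" using Gder[of t] t by (auto simp: c_def)
        have "((\<lambda>t. (G (t + h k) - G t) / h k) has_real_derivative (g (t + h k) - g t) / h k) (at t)"
          using DERIV_cdivide[OF DERIV_diff[OF d1 d2], of "h k"] by simp
        thus "((\<lambda>t. (G (t + h k) - G t) / h k) has_vector_derivative (g (t + h k) - g t) / h k) (at t within {a..b})"
          by (simp add: has_real_derivative_iff_has_vector_derivative has_vector_derivative_at_within)
      qed
      thus ?thesis by (simp add: diff_divide_distrib)
    qed
    thus ?thesis unfolding D_def by (simp add: integral_unique diff_divide_distrib)
  qed
  have lim2: "(\<lambda>k. integral {a..b} (D k)) \<longlonglongrightarrow> g b - g a"
  proof -
    have "(\<lambda>k. (G (b + h k) - G b) / h k) \<longlonglongrightarrow> g b"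
      using deriv_seq[OF Gder[of b]] ab by (simp add: h_def c_def)
    moreover have "(\<lambda>k. (G (a + h k) - G a) / h k) \<longlonglongrightarrow> g a"
      using deriv_seq[OF Gder[of a]] ab by (simp add: h_def c_def)
    ultimately have "(\<lambda>k. (G (b + h k) - G b) / h k - (G (a + h k) - G a) / h k) \<longlonglongrightarrow> g b - g a"
      by (rule tendsto_diff)
    thus ?thesis by (simp add: Dint diff_divide_distrib)
  qed
  have "integral S (D k) = integral {a..b} (D k)" for k
    by (rule integral_spike_set[OF negS2 negS1])
  hence "integral S g' = g b - g a" using lim1 lim2 LIMSEQ_unique by auto
  hence "(g' has_integral (g b - g a)) S" using g'S by (metis integrable_integral)
  thus ?thesis using has_integral_spike_set_eq[OF negS2 negS1] by blast
qed



lemma half_half: "1/(2*k) + 1/(2*k) = 1/(k::real)"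
  by (cases "k = 0") (simp_all add: field_simps)

lemma tri_abs: "\<bar>x - L\<bar> < e \<Longrightarrow> \<bar>y - L\<bar> < e \<Longrightarrow> e + e = c \<Longrightarrow> \<bar>x - y\<bar> \<le> (c::real)"
  by arith

lemma tri_abs2: "\<bar>a - b\<bar> \<le> c \<Longrightarrow> \<bar>b - L\<bar> < r/2 \<Longrightarrow> c < r/2 \<Longrightarrow> \<bar>a - L\<bar> < (r::real)"
  by arith

lemma real_diff_cauchy:
  fixes g :: "real \<Rightarrow> real"
  shows "g differentiable (at t) \<longleftrightarrow> (\<forall>n::nat. \<exists>m::nat. \<forall>h h'. h \<noteq> 0 \<and> \<bar>h\<bar> < 1/Suc m \<and> h' \<noteq> 0 \<and> \<bar>h'\<bar> < 1/Suc m
      \<longrightarrow> \<bar>(g (t+h) - g t)/h - (g (t+h') - g t)/h'\<bar> \<le> 1/Suc n)"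
    (is "_ \<longleftrightarrow> (\<forall>n. \<exists>m. ?C n m)")
proof
  assume "g differentiable (at t)"
  then obtain L where "(g has_real_derivative L) (at t)" using real_differentiable_def by blast
  hence lim: "(\<lambda>h. (g (t + h) - g t) / h) \<midarrow>0\<rightarrow> L" by (simp add: DERIV_def)
  show "\<forall>n. \<exists>m. ?C n m"
  proof
    fix n :: nat
    have "(0::real) < 1 / (2 * real (Suc n))" by simp
    then obtain d where d: "d > 0" "\<And>h. h \<noteq> 0 \<and> norm (h - 0) < d \<Longrightarrow> norm ((g (t + h) - g t) / h - L) < 1 / (2 * real (Suc n))"
      using lim unfolding LIM_eq by blast
    obtain m where m: "1 / real (Suc m) < d" using small_nat[OF d(1)] by blast
    have "?C n m"
    proof (intro allI impI)
      fix h h' :: real assume hh: "h \<noteq> 0 \<and> \<bar>h\<bar> < 1/Suc m \<and> h' \<noteq> 0 \<and> \<bar>h'\<bar> < 1/Suc m"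
      have a: "\<bar>(g (t + h) - g t) / h - L\<bar> < 1 / (2 * real (Suc n))" using d(2)[of h] hh m by auto
      have b: "\<bar>(g (t + h') - g t) / h' - L\<bar> < 1 / (2 * real (Suc n))" using d(2)[of h'] hh m by auto
      have "1 / (2 * real (Suc n)) + 1 / (2 * real (Suc n)) = 1 / real (Suc n)" by (rule half_half)
      thus "\<bar>(g (t+h) - g t)/h - (g (t+h') - g t)/h'\<bar> \<le> 1/Suc n" using tri_abs[OF a b] by blast
    qed
    thus "\<exists>m. ?C n m" by blast
  qed
next
  assume C: "\<forall>n. \<exists>m. ?C n m"
  define s where "s = (\<lambda>h. (g (t + h) - g t) / h)"
  define hk where "hk = (\<lambda>k::nat. inverse (real (Suc k)))"
  have hk: "hk k \<noteq> 0" "\<bar>hk k\<bar> \<le> 1 / Suc k" for k by (auto simp: hk_def divide_inverse)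
  have "Cauchy (\<lambda>k. s (hk k))"
  proof (rule metric_CauchyI)
    fix e :: real assume "e > 0"
    then obtain n where n: "1 / real (Suc n) < e" using small_nat by blast
    obtain m where m: "?C n m" using C by blast
    show "\<exists>M. \<forall>k\<ge>M. \<forall>k'\<ge>M. dist (s (hk k)) (s (hk k')) < e"
    proof (intro exI allI impI)
      fix k k' assume "Suc m \<le> k" "Suc m \<le> k'"
      hence "1 / real (Suc k) < 1 / Suc m" "1 / real (Suc k') < 1 / Suc m" by (auto simp: frac_less2)
      hence "\<bar>hk k\<bar> < 1 / Suc m" "\<bar>hk k'\<bar> < 1 / Suc m" using hk[of k] hk[of k'] by linarith+
      hence "\<bar>s (hk k) - s (hk k')\<bar> \<le> 1 / Suc n" using m hk by (simp add: s_def)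
      thus "dist (s (hk k)) (s (hk k')) < e" using n by (simp add: dist_real_def)
    qed
  qed
  then obtain L where L: "(\<lambda>k. s (hk k)) \<longlonglongrightarrow> L" using Cauchy_convergent_iff convergent_def by blast
  have "s \<midarrow>0\<rightarrow> L"
    unfolding LIM_eq
  proof (intro allI impI)
    fix r :: real assume r: "r > 0"
    then obtain n where n: "1 / real (Suc n) < r / 2" using small_nat[of "r/2"] by auto
    obtain m where m: "?C n m" using C by blast
    obtain K where K: "\<And>k. k \<ge> K \<Longrightarrow> \<bar>s (hk k) - L\<bar> < r / 2"
      using L r unfolding LIMSEQ_def dist_real_def by (metis half_gt_zero)
    define k where "k = max K (Suc m)"
    have "1 / real (Suc k) < 1 / Suc m" by (auto simp: k_def frac_less2)
    hence hkm: "\<bar>hk k\<bar> < 1 / Suc m" using hk[of k] by linarith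
    show "\<exists>d>0. \<forall>h. h \<noteq> 0 \<and> norm (h - 0) < d \<longrightarrow> norm (s h - L) < r"
    proof (intro exI[of _ "1 / real (Suc m)"] conjI allI impI)
      fix h :: real assume "h \<noteq> 0 \<and> norm (h - 0) < 1 / real (Suc m)"
      hence "\<bar>s h - s (hk k)\<bar> \<le> 1 / Suc n" using m hkm hk by (simp add: s_def)
      moreover have "\<bar>s (hk k) - L\<bar> < r / 2" using K by (simp add: k_def)
      ultimately show "norm (s h - L) < r" using n tri_abs2 by (metis real_norm_def)
    qed simp
  qed
  hence "(g has_real_derivative L) (at t)" by (simp add: DERIV_def s_def)
  thus "g differentiable (at t)" using real_differentiable_def by blast
qed

lemma diffset_borel_real:
  fixes g :: "real \<Rightarrow> real"
  assumes cont: "continuous_on UNIV g"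
  shows "{t. g differentiable (at t)} \<in> sets borel"
proof -
  define C where "C = (\<lambda>n m::nat. \<Inter>hh\<in>{(h,h'). h \<noteq> 0 \<and> \<bar>h\<bar> < 1/Suc m \<and> h' \<noteq> 0 \<and> \<bar>h'\<bar> < 1/Suc m}.
      {t. \<bar>(g (t + fst hh) - g t)/fst hh - (g (t + snd hh) - g t)/snd hh\<bar> \<le> 1/Suc n})"
  have "closed (C n m)" for n m
    unfolding C_def
    by (intro closed_INT ballI closed_Collect_le continuous_intros continuous_on_compose2[OF cont]) auto
  hence "C n m \<in> sets borel" for n m by (rule borel_closed)
  hence "(\<Inter>n. \<Union>m. C n m) \<in> sets borel" by auto
  moreover have "{t. g differentiable (at t)} = (\<Inter>n. \<Union>m. C n m)"
    unfolding real_diff_cauchy C_def by auto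
  ultimately show ?thesis by simp
qed

lemma vd_real_measurable:
  fixes g :: "real \<Rightarrow> real"
  assumes cont: "continuous_on UNIV g"
  shows "(\<lambda>t. if g differentiable (at t) then vector_derivative g (at t) else 0) \<in> borel_measurable borel"
proof -
  define D where "D = {t. g differentiable (at t)}"
  have Db: "D \<in> sets borel" unfolding D_def by (rule diffset_borel_real[OF cont])
  define F where "F = (\<lambda>k t. if t \<in> D then (g (t + inverse (real (Suc k))) - g t) / inverse (real (Suc k)) else 0)"
  have "F k \<in> borel_measurable borel" for k
    unfolding F_def
    by (rule measurable_If_set) (auto intro!: borel_measurable_continuous_onI continuous_intros
        continuous_on_compose2[OF cont] simp: Db)
  moreover have "(\<lambda>k. F k t) \<longlonglongrightarrow> (if g differentiable (at t) then vector_derivative g (at t) else 0)" for t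
  proof (cases "t \<in> D")
    case True
    hence "(g has_vector_derivative vector_derivative g (at t)) (at t)" using vector_derivative_works by (auto simp: D_def)
    hence "(g has_real_derivative vector_derivative g (at t)) (at t)" by (simp add: has_real_derivative_iff_has_vector_derivative)
    from deriv_seq[OF this] show ?thesis using True by (simp add: F_def D_def)
  next
    case False thus ?thesis by (simp add: F_def D_def)
  qed
  ultimately show ?thesis by (rule borel_measurable_LIMSEQ_metric)
qed

lemma vd_nondiff: "\<not> f differentiable (at t) \<Longrightarrow> vector_derivative f (at t) = (SOME f'. False)"
  unfolding vector_derivative_def by (metis differentiableI_vector)

lemma vd_measurable:
  fixes f :: "real \<Rightarrow> 'a::euclidean_space"
  assumes cont: "continuous_on UNIV f"
  shows "(\<lambda>t. vector_derivative f (at t)) \<in> borel_measurable borel"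
proof -
  define D where "D = {t. f differentiable (at t)}"
  have "D = (\<Inter>i\<in>Basis. {t. (\<lambda>x. f x \<bullet> i) differentiable (at t)})"
    unfolding D_def using differentiable_componentwise_within[of f _ UNIV] by auto
  moreover have "{t. (\<lambda>x. f x \<bullet> i) differentiable (at t)} \<in> sets borel" for i
    by (rule diffset_borel_real) (intro continuous_intros cont)
  ultimately have Db: "D \<in> sets borel" by auto
  show ?thesis
  proof (subst borel_measurable_euclidean_space, intro ballI)
    fix i :: 'a assume i: "i \<in> Basis"
    define H where "H = (\<lambda>t. if (\<lambda>x. f x \<bullet> i) differentiable (at t) then vector_derivative (\<lambda>x. f x \<bullet> i) (at t) else 0)"
    have Hm: "H \<in> borel_measurable borel" unfolding H_def
      by (rule vd_real_measurable) (intro continuous_intros cont)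
    have eq: "(\<lambda>t. vector_derivative f (at t) \<bullet> i) = (\<lambda>t. if t \<in> D then H t else (SOME f'. False) \<bullet> i)"
    proof
      fix t show "vector_derivative f (at t) \<bullet> i = (if t \<in> D then H t else (SOME f'. False) \<bullet> i)"
      proof (cases "t \<in> D")
        case True
        hence vd: "(f has_vector_derivative vector_derivative f (at t)) (at t)" using vector_derivative_works by (auto simp: D_def)
        have "((\<lambda>x. f x \<bullet> i) has_vector_derivative vector_derivative f (at t) \<bullet> i) (at t)"
          by (rule bounded_linear.has_vector_derivative[OF bounded_linear_inner_left vd])
        thus ?thesis using True by (auto simp: H_def vector_derivative_at dest: differentiableI_vector)
      next
        case False thus ?thesis by (simp add: D_def vd_nondiff)
      qed
    qed
    show "(\<lambda>t. vector_derivative f (at t) \<bullet> i) \<in> borel_measurable borel"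
      unfolding eq by (rule measurable_If_set) (auto simp: Hm Db)
  qed
qed



definition clampext :: "real \<Rightarrow> (real \<Rightarrow> 'a) \<Rightarrow> real \<Rightarrow> 'a" where
  "clampext L f t = f (max 0 (min L t))"

lemma clampext_eq: "t \<in> {0..L} \<Longrightarrow> clampext L f t = f t"
  by (simp add: clampext_def)

lemma clampext_lip:
  assumes "M-lipschitz_on {0..L} f" "0 \<le> L"
  shows "M-lipschitz_on UNIV (clampext L f)"
proof (rule lipschitz_onI)
  fix x y :: real
  have "dist (f (max 0 (min L x))) (f (max 0 (min L y))) \<le> M * dist (max 0 (min L x)) (max 0 (min L y))"
    by (rule lipschitz_onD[OF assms(1)]) (use assms(2) in auto)
  also have "\<dots> \<le> M * dist x y"
    using lipschitz_on_nonneg[OF assms(1)] by (intro mult_left_mono) (auto simp: dist_real_def)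
  finally show "dist (clampext L f x) (clampext L f y) \<le> M * dist x y" by (simp add: clampext_def)
qed (use assms lipschitz_on_nonneg in blast)

lemma hvd_local:
  fixes f g :: "real \<Rightarrow> 'b::real_normed_vector"
  assumes "open S" "t \<in> S" "\<And>y. y \<in> S \<Longrightarrow> f y = g y"
  shows "(f has_vector_derivative D) (at t) \<longleftrightarrow> (g has_vector_derivative D) (at t)"
  using has_vector_derivative_transform_within_open[of f D t S g] has_vector_derivative_transform_within_open[of g D t S f] assms
  by auto

lemma vd_local:
  fixes f g :: "real \<Rightarrow> 'b::real_normed_vector"
  assumes "open S" "t \<in> S" "\<And>y. y \<in> S \<Longrightarrow> f y = g y"
  shows "vector_derivative f (at t) = vector_derivative g (at t)"
proof -
  have "\<And>D. (f has_vector_derivative D) (at t) \<longleftrightarrow> (g has_vector_derivative D) (at t)"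
    using hvd_local[of S t f g] assms by blast
  thus ?thesis unfolding vector_derivative_def by simp
qed

lemma diff_local:
  fixes f g :: "real \<Rightarrow> 'b::real_normed_vector"
  assumes "open S" "t \<in> S" "\<And>y. y \<in> S \<Longrightarrow> f y = g y"
  shows "f differentiable (at t) \<longleftrightarrow> g differentiable (at t)"
proof -
  have "\<And>D. (f has_vector_derivative D) (at t) \<longleftrightarrow> (g has_vector_derivative D) (at t)"
    using hvd_local[of S t f g] assms by blast
  thus ?thesis using vector_derivative_works differentiableI_vector by metis
qed

lemma clampext_local:
  fixes f :: "real \<Rightarrow> 'b::real_normed_vector"
  assumes "t \<in> {0<..<L}"
  shows "(clampext L f has_vector_derivative D) (at t) \<longleftrightarrow> (f has_vector_derivative D) (at t)"
    "vector_derivative (clampext L f) (at t) = vector_derivative f (at t)"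
    "clampext L f differentiable (at t) \<longleftrightarrow> f differentiable (at t)"
  using hvd_local[of "{0<..<L}" t "clampext L f" f] vd_local[of "{0<..<L}" t "clampext L f" f]
    diff_local[of "{0<..<L}" t "clampext L f" f] assms
  by (auto simp: clampext_def)

lemma lip_real_deriv_bound:
  fixes g :: "real \<Rightarrow> real"
  assumes "B-lipschitz_on UNIV g" "(g has_real_derivative D) (at t)"
  shows "\<bar>D\<bar> \<le> B"
proof -
  have lim: "(\<lambda>k. \<bar>(g (t + inverse (real (Suc k))) - g t) / inverse (real (Suc k))\<bar>) \<longlonglongrightarrow> \<bar>D\<bar>"
    by (rule tendsto_rabs[OF deriv_seq[OF assms(2)]])
  have "\<bar>(g (t + inverse (real (Suc k))) - g t) / inverse (real (Suc k))\<bar> \<le> B" for k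
  proof -
    have "\<bar>g (t + inverse (real (Suc k))) - g t\<bar> \<le> B * \<bar>inverse (real (Suc k))\<bar>"
      using lipschitz_on_normD[OF assms(1), of "t + inverse (real (Suc k))" t] by simp
    thus ?thesis by (simp add: abs_divide divide_le_eq)
  qed
  thus ?thesis using LIMSEQ_le_const2[OF lim] by blast
qed

lemma lip_vderiv_bound:
  fixes f :: "real \<Rightarrow> 'a::euclidean_space"
  assumes lip: "B-lipschitz_on UNIV f" and d: "(f has_vector_derivative D) (at t)"
  shows "norm D \<le> B"
proof (cases "D = 0")
  case True thus ?thesis using lipschitz_on_nonneg[OF lip] by simp
next
  case False
  have "((\<lambda>x. f x \<bullet> D) has_vector_derivative D \<bullet> D) (at t)"
    by (rule bounded_linear.has_vector_derivative[OF bounded_linear_inner_left d])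
  hence d2: "((\<lambda>x. f x \<bullet> D) has_real_derivative D \<bullet> D) (at t)"
    by (simp add: has_real_derivative_iff_has_vector_derivative)
  have lip2: "(B * norm D)-lipschitz_on UNIV (\<lambda>x. f x \<bullet> D)"
  proof (rule lipschitz_onI)
    fix x y :: real
    have "\<bar>(f x - f y) \<bullet> D\<bar> \<le> norm (f x - f y) * norm D" by (rule Cauchy_Schwarz_ineq2)
    also have "\<dots> \<le> (B * dist x y) * norm D"
      using lipschitz_onD[OF lip, of x y] by (intro mult_right_mono) (auto simp: dist_norm)
    finally show "dist (f x \<bullet> D) (f y \<bullet> D) \<le> B * norm D * dist x y"
      by (simp add: dist_real_def inner_diff_left mult_ac)
  qed (use lipschitz_on_nonneg[OF lip] in simp)
  have "\<bar>D \<bullet> D\<bar> \<le> B * norm D" by (rule lip_real_deriv_bound[OF lip2 d2])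
  hence "norm D * norm D \<le> B * norm D" by (simp add: power2_norm_eq_inner[symmetric] power2_eq_square)
  thus ?thesis using False by simp
qed

lemma pointwise_ineq:
  fixes T S U du dT dS lam :: "'a::real_inner"
  assumes T: "norm T = 1" and S: "norm S = 1"
    and e1: "du + (U \<bullet> dT) *\<^sub>R T = b *\<^sub>R (lam - (lam \<bullet> T) *\<^sub>R T)"
    and e2: "norm U *\<^sub>R dT = k *\<^sub>R U"
    and dS: "norm dS \<le> K"
    and w: "b * (lam \<bullet> T) + k * norm U \<le> c * b"
  shows "k * norm U \<le> b * (lam \<bullet> (S - T)) + c / 2 * (b * (norm (S - T))\<^sup>2) + K * norm U
           - ((du \<bullet> S + U \<bullet> dS) - (du \<bullet> T + U \<bullet> dT))"
proof -
  have UdT: "U \<bullet> dT = k * norm U"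
  proof (cases "U = 0")
    case True thus ?thesis by simp
  next
    case False
    have "(norm U *\<^sub>R dT) \<bullet> U = (k *\<^sub>R U) \<bullet> U" using e2 by simp
    hence "norm U * (U \<bullet> dT) = k * (norm U * norm U)"
      by (simp add: inner_commute power2_eq_square[symmetric] dot_square_norm)
    thus ?thesis using False by (simp add: mult.assoc)
  qed
  have du: "du = b *\<^sub>R (lam - (lam \<bullet> T) *\<^sub>R T) - (k * norm U) *\<^sub>R T"
    using e1 UdT by (simp add: eq_diff_eq)
  have TT: "T \<bullet> T = 1" using T by (simp add: dot_square_norm)
  have SS: "S \<bullet> S = 1" using S by (simp add: dot_square_norm)
  have nsq: "(norm (S - T))\<^sup>2 = 2 - 2 * (T \<bullet> S)"
    using TT SS by (simp add: power2_norm_eq_inner inner_diff_left inner_diff_right inner_commute)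
  have duS: "du \<bullet> S = b * (lam \<bullet> S) - b * (lam \<bullet> T) * (T \<bullet> S) - k * norm U * (T \<bullet> S)"
    by (simp add: du inner_diff_left algebra_simps)
  have duT: "du \<bullet> T = - (k * norm U)"
    using TT by (simp add: du inner_diff_left algebra_simps)
  have UdS: "U \<bullet> dS \<le> K * norm U"
  proof -
    have "U \<bullet> dS \<le> norm U * norm dS" by (rule norm_cauchy_schwarz)
    also have "\<dots> \<le> norm U * K" using dS by (intro mult_left_mono) auto
    finally show ?thesis by (simp add: mult.commute)
  qed
  have X1: "T \<bullet> S \<le> 1"
    using norm_cauchy_schwarz[of T S] T S by simp
  have P: "0 \<le> (c*b - (b*(lam \<bullet> T) + k*norm U)) * (1 - T \<bullet> S)"
    using w X1 by (intro mult_nonneg_nonneg) auto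
  have eqn: "b * (lam \<bullet> (S - T)) + c / 2 * (b * (norm (S - T))\<^sup>2) + K * norm U
           - ((du \<bullet> S + U \<bullet> dS) - (du \<bullet> T + U \<bullet> dT)) - k * norm U
        = (c*b - (b*(lam \<bullet> T) + k*norm U)) * (1 - T \<bullet> S) + (K * norm U - U \<bullet> dS)"
    unfolding nsq duS duT UdT inner_diff_right by (simp add: field_simps)
  show ?thesis using eqn P UdS by linarith
qed

lemma has_integral_le_ae:
  fixes f g :: "real \<Rightarrow> real"
  assumes f: "(f has_integral i) S" and g: "(g has_integral j) S" and N: "negligible N"
    and le: "\<And>x. x \<in> S - N \<Longrightarrow> f x \<le> g x"
  shows "i \<le> j"
proof -
  define f2 where "f2 = (\<lambda>x. if x \<in> N then 0 else f x)"
  define g2 where "g2 = (\<lambda>x. if x \<in> N then 0 else g x)"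
  have f2: "(f2 has_integral i) S" by (rule has_integral_spike[OF N _ f]) (auto simp: f2_def)
  have g2: "(g2 has_integral j) S" by (rule has_integral_spike[OF N _ g]) (auto simp: g2_def)
  show ?thesis by (rule has_integral_le[OF f2 g2]) (use le in \<open>auto simp: f2_def g2_def\<close>)
qed

lemma ae_negl:
  assumes "AE x in lborel. P x"
  obtains N where "negligible N" "\<And>x. x \<notin> N \<Longrightarrow> P x"
proof -
  obtain N where N: "{x \<in> space lborel. \<not> P x} \<subseteq> N" "emeasure lborel N = 0" "N \<in> sets lborel"
    using AE_E[OF assms] by blast
  have "N \<in> null_sets lborel" using N by auto
  hence "N \<in> null_sets lebesgue" by (auto intro: null_sets_completionI)
  hence "negligible N" by (simp add: negligible_iff_null_sets)
  thus ?thesis using that N(1) by auto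
qed

lemma lip_inner:
  fixes f g :: "real \<Rightarrow> 'a::real_inner"
  assumes "M1-lipschitz_on UNIV f" "M2-lipschitz_on UNIV g" "\<And>x. norm (f x) \<le> B1" "\<And>x. norm (g x) \<le> B2"
  shows "(M1*B2 + B1*M2)-lipschitz_on UNIV (\<lambda>x. f x \<bullet> g x)"
proof (rule lipschitz_onI)
  fix x y :: real
  have M10: "0 \<le> M1" "0 \<le> M2" using assms(1,2) lipschitz_on_nonneg by blast+
  have "f x \<bullet> g x - f y \<bullet> g y = (f x - f y) \<bullet> g x + f y \<bullet> (g x - g y)"
    by (simp add: inner_diff_left inner_diff_right)
  hence "\<bar>f x \<bullet> g x - f y \<bullet> g y\<bar> \<le> \<bar>(f x - f y) \<bullet> g x\<bar> + \<bar>f y \<bullet> (g x - g y)\<bar>" by simp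
  also have "\<bar>(f x - f y) \<bullet> g x\<bar> \<le> (M1 * dist x y) * B2"
  proof -
    have "\<bar>(f x - f y) \<bullet> g x\<bar> \<le> norm (f x - f y) * norm (g x)" by (rule Cauchy_Schwarz_ineq2)
    also have "\<dots> \<le> (M1 * dist x y) * B2"
      using lipschitz_onD[OF assms(1), of x y] assms(4)[of x] M10 by (intro mult_mono) (auto simp: dist_norm)
    finally show ?thesis .
  qed
  also have "\<bar>f y \<bullet> (g x - g y)\<bar> \<le> B1 * (M2 * dist x y)"
  proof -
    have "\<bar>f y \<bullet> (g x - g y)\<bar> \<le> norm (f y) * norm (g x - g y)" by (rule Cauchy_Schwarz_ineq2)
    also have "\<dots> \<le> B1 * (M2 * dist x y)"
      using lipschitz_onD[OF assms(2), of x y] assms(3)[of y] M10 by (intro mult_mono) (auto simp: dist_norm order_trans[OF norm_ge_zero])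
    finally show ?thesis .
  qed
  finally show "dist (f x \<bullet> g x) (f y \<bullet> g y) \<le> (M1*B2 + B1*M2) * dist x y"
    by (simp add: dist_real_def algebra_simps)
next
  have "0 \<le> M1" "0 \<le> M2" using assms(1,2) lipschitz_on_nonneg by blast+
  moreover have "0 \<le> B1" "0 \<le> B2" using assms(3)[of 0] assms(4)[of 0] norm_ge_zero order_trans by blast+
  ultimately show "0 \<le> M1*B2 + B1*M2" by simp
qed

lemma lip_bounded_on:
  fixes u :: "real \<Rightarrow> 'a::real_normed_vector"
  assumes "M-lipschitz_on {0..L} u"
  obtains B where "\<And>t. t \<in> {0..L} \<Longrightarrow> norm (u t) \<le> B"
proof -
  have "continuous_on {0..L} u" using assms by (rule lipschitz_on_continuous_on)
  hence "compact (u ` {0..L})" by (rule compact_continuous_image) simp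
  hence "bounded (u ` {0..L})" by (rule compact_imp_bounded)
  then obtain B where "\<forall>x\<in>u ` {0..L}. norm x \<le> B" by (auto simp: bounded_iff)
  hence "\<And>t. t \<in> {0..L} \<Longrightarrow> norm (u t) \<le> B" by blast
  thus ?thesis by (rule that)
qed

lemma ftc_inner:
  fixes u \<sigma> :: "real \<Rightarrow> 'a::euclidean_space"
  assumes L: "L > 0" and ulip: "Mu-lipschitz_on {0..L} u" and slip: "Ms-lipschitz_on {0..L} \<sigma>"
    and sS: "\<forall>t\<in>{0..L}. norm (\<sigma> t) = 1"
    and N: "negligible N"
    and diff: "\<And>t. t \<in> {0<..<L} \<Longrightarrow> t \<notin> N \<Longrightarrow> u differentiable (at t) \<and> \<sigma> differentiable (at t)"
  shows "((\<lambda>t. vector_derivative u (at t) \<bullet> \<sigma> t + u t \<bullet> vector_derivative \<sigma> (at t)) has_integral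
           (u L \<bullet> \<sigma> L - u 0 \<bullet> \<sigma> 0)) {0..L}"
proof -
  obtain B where B: "\<And>t. t \<in> {0..L} \<Longrightarrow> norm (u t) \<le> B" using lip_bounded_on[OF ulip] by blast
  define ue where "ue = clampext L u"
  define se where "se = clampext L \<sigma>"
  have uel: "Mu-lipschitz_on UNIV ue" unfolding ue_def by (rule clampext_lip[OF ulip]) (use L in simp)
  have sel: "Ms-lipschitz_on UNIV se" unfolding se_def by (rule clampext_lip[OF slip]) (use L in simp)
  have ueB: "norm (ue x) \<le> B" for x unfolding ue_def clampext_def by (rule B) (use L in auto)
  have seB: "norm (se x) \<le> 1" for x unfolding se_def clampext_def using sS L by auto
  have glip: "(Mu*1 + B*Ms)-lipschitz_on UNIV (\<lambda>x. ue x \<bullet> se x)"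
    by (rule lip_inner[OF uel sel ueB seB])
  have "((\<lambda>t. vector_derivative u (at t) \<bullet> \<sigma> t + u t \<bullet> vector_derivative \<sigma> (at t)) has_integral
         (ue L \<bullet> se L - ue 0 \<bullet> se 0)) {0..L}"
  proof (rule lip_ftc[OF glip _ _ ])
    show "0 \<le> L" using L by simp
    show "negligible (N \<union> {0, L})" using N by auto
  next
    fix t assume t: "t \<in> {0..L} - (N \<union> {0, L})"
    hence t': "t \<in> {0<..<L}" "t \<notin> N" by auto
    have du: "(ue has_vector_derivative vector_derivative u (at t)) (at t)"
      using diff[OF t'] clampext_local(1)[OF t'(1), of u] vector_derivative_works by (auto simp: ue_def)
    have ds: "(se has_vector_derivative vector_derivative \<sigma> (at t)) (at t)"
      using diff[OF t'] clampext_local(1)[OF t'(1), of \<sigma>] vector_derivative_works by (auto simp: se_def)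
    have "((\<lambda>x. ue x \<bullet> se x) has_vector_derivative
            (ue t \<bullet> vector_derivative \<sigma> (at t) + vector_derivative u (at t) \<bullet> se t)) (at t)"
      by (rule bounded_bilinear.has_vector_derivative[OF bounded_bilinear_inner du ds])
    moreover have "ue t = u t" "se t = \<sigma> t" using t' by (auto simp: ue_def se_def clampext_eq)
    ultimately show "((\<lambda>x. ue x \<bullet> se x) has_real_derivative
            (vector_derivative u (at t) \<bullet> \<sigma> t + u t \<bullet> vector_derivative \<sigma> (at t))) (at t)"
      by (simp add: has_real_derivative_iff_has_vector_derivative add.commute)
  qed
  moreover have "ue L = u L" "se L = \<sigma> L" "ue 0 = u 0" "se 0 = \<sigma> 0"
    using L by (auto simp: ue_def se_def clampext_eq)
  ultimately show ?thesis by simp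
qed

lemma core_ineq:
  fixes \<tau> \<sigma> u :: "real \<Rightarrow> 'a::euclidean_space" and lam :: 'a and \<beta> :: "real \<Rightarrow> real"
  assumes L: "L > 0"
    and tlip: "Mt-lipschitz_on {0..L} \<tau>" and slip: "Ms-lipschitz_on {0..L} \<sigma>" and ulip: "Mu-lipschitz_on {0..L} u"
    and tS: "\<forall>t\<in>{0..L}. norm (\<tau> t) = 1" and sS: "\<forall>t\<in>{0..L}. norm (\<sigma> t) = 1"
    and ends: "\<sigma> 0 = \<tau> 0" "\<sigma> L = \<tau> L"
    and tI: "((\<lambda>t. \<beta> t *\<^sub>R \<tau> t) has_integral a) {0..L}" and sI: "((\<lambda>t. \<beta> t *\<^sub>R \<sigma> t) has_integral a) {0..L}"
    and eqs: "AE t in lborel. t \<in> {0<..<L} \<longrightarrow> u differentiable (at t) \<and> \<tau> differentiable (at t) \<and>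
          vector_derivative u (at t) + (u t \<bullet> vector_derivative \<tau> (at t)) *\<^sub>R \<tau> t
            = \<beta> t *\<^sub>R (lam - (lam \<bullet> \<tau> t) *\<^sub>R \<tau> t) \<and>
          norm (u t) *\<^sub>R vector_derivative \<tau> (at t) = k *\<^sub>R u t"
    and Ks: "AE t in lborel. t \<in> {0<..<L} \<longrightarrow> norm (vector_derivative \<sigma> (at t)) \<le> K"
    and w: "\<forall>t\<in>{0..L}. \<beta> t * (lam \<bullet> \<tau> t) + k * norm (u t) \<le> c * \<beta> t"
    and Xint: "(\<lambda>t. c / 2 * (\<beta> t * (norm (\<sigma> t - \<tau> t))\<^sup>2)) integrable_on {0..L}"
  shows "k * integral {0..L} (\<lambda>t. norm (u t)) \<le>
           integral {0..L} (\<lambda>t. c / 2 * (\<beta> t * (norm (\<sigma> t - \<tau> t))\<^sup>2)) + K * integral {0..L} (\<lambda>t. norm (u t))"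
proof -
  obtain N1 where N1: "negligible N1" and N1P: "\<And>t. t \<notin> N1 \<Longrightarrow> t \<in> {0<..<L} \<longrightarrow> u differentiable (at t) \<and> \<tau> differentiable (at t) \<and>
          vector_derivative u (at t) + (u t \<bullet> vector_derivative \<tau> (at t)) *\<^sub>R \<tau> t
            = \<beta> t *\<^sub>R (lam - (lam \<bullet> \<tau> t) *\<^sub>R \<tau> t) \<and>
          norm (u t) *\<^sub>R vector_derivative \<tau> (at t) = k *\<^sub>R u t"
    using ae_negl[OF eqs] by blast
  obtain N2 where N2: "negligible N2" and N2P: "\<And>t. t \<notin> N2 \<Longrightarrow> t \<in> {0<..<L} \<longrightarrow> norm (vector_derivative \<sigma> (at t)) \<le> K"
    using ae_negl[OF Ks] by blast
  define N3 where "N3 = {t. \<not> clampext L \<sigma> differentiable (at t)}"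
  have "Ms-lipschitz_on UNIV (clampext L \<sigma>)" by (rule clampext_lip[OF slip]) (use L in simp)
  hence N3: "negligible N3" unfolding N3_def using lip_vec_ae_diff negligible_iff_null_sets by blast
  define N where "N = N1 \<union> N2 \<union> N3 \<union> {0, L}"
  have N: "negligible N" using N1 N2 N3 by (simp add: N_def)
  have Ndiff: "u differentiable (at t) \<and> \<sigma> differentiable (at t)" if "t \<in> {0<..<L}" "t \<notin> N" for t
  proof -
    have "clampext L \<sigma> differentiable (at t)" using that by (auto simp: N_def N3_def)
    thus ?thesis using clampext_local(3)[OF that(1), of \<sigma>] N1P[of t] that by (auto simp: N_def)
  qed
  have tdiff: "u differentiable (at t) \<and> \<tau> differentiable (at t)" if "t \<in> {0<..<L}" "t \<notin> N" for t
    using N1P[of t] that by (auto simp: N_def)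
  have Is: "((\<lambda>t. vector_derivative u (at t) \<bullet> \<sigma> t + u t \<bullet> vector_derivative \<sigma> (at t)) has_integral
           (u L \<bullet> \<sigma> L - u 0 \<bullet> \<sigma> 0)) {0..L}"
    by (rule ftc_inner[OF L ulip slip sS N Ndiff])
  have It: "((\<lambda>t. vector_derivative u (at t) \<bullet> \<tau> t + u t \<bullet> vector_derivative \<tau> (at t)) has_integral
           (u L \<bullet> \<tau> L - u 0 \<bullet> \<tau> 0)) {0..L}"
    by (rule ftc_inner[OF L ulip tlip tS N tdiff])
  define E where "E = (\<lambda>t. (vector_derivative u (at t) \<bullet> \<sigma> t + u t \<bullet> vector_derivative \<sigma> (at t))
                    - (vector_derivative u (at t) \<bullet> \<tau> t + u t \<bullet> vector_derivative \<tau> (at t)))"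
  have IE: "(E has_integral 0) {0..L}"
    using has_integral_diff[OF Is It] ends by (simp add: E_def)
  have A: "((\<lambda>t. \<beta> t *\<^sub>R \<sigma> t - \<beta> t *\<^sub>R \<tau> t) has_integral a - a) {0..L}"
    by (rule has_integral_diff[OF sI tI])
  have "((\<lambda>t. lam \<bullet> (\<beta> t *\<^sub>R \<sigma> t - \<beta> t *\<^sub>R \<tau> t)) has_integral lam \<bullet> (a - a)) {0..L}"
    using has_integral_linear[OF A bounded_linear_inner_right[of lam]] by (simp add: o_def)
  hence "((\<lambda>t. lam \<bullet> (\<beta> t *\<^sub>R \<sigma> t - \<beta> t *\<^sub>R \<tau> t)) has_integral 0) {0..L}" by simp
  hence Ib: "((\<lambda>t. \<beta> t * (lam \<bullet> (\<sigma> t - \<tau> t))) has_integral 0) {0..L}"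
    by (simp add: inner_diff_right right_diff_distrib)
  have ucont: "continuous_on {0..L} (\<lambda>t. norm (u t))"
    using lipschitz_on_continuous_on[OF ulip] by (intro continuous_intros)
  have Iu: "((\<lambda>t. norm (u t)) has_integral integral {0..L} (\<lambda>t. norm (u t))) {0..L}"
    using integrable_continuous_interval[OF ucont] by (rule integrable_integral)
  have IX: "((\<lambda>t. c / 2 * (\<beta> t * (norm (\<sigma> t - \<tau> t))\<^sup>2)) has_integral
               integral {0..L} (\<lambda>t. c / 2 * (\<beta> t * (norm (\<sigma> t - \<tau> t))\<^sup>2))) {0..L}"
    using Xint by (rule integrable_integral)
  have IR: "((\<lambda>t. \<beta> t * (lam \<bullet> (\<sigma> t - \<tau> t)) + c / 2 * (\<beta> t * (norm (\<sigma> t - \<tau> t))\<^sup>2)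
               + K * norm (u t) - E t) has_integral
              (0 + integral {0..L} (\<lambda>t. c / 2 * (\<beta> t * (norm (\<sigma> t - \<tau> t))\<^sup>2))
               + K * integral {0..L} (\<lambda>t. norm (u t)) - 0)) {0..L}"
    by (intro has_integral_diff has_integral_add Ib IX IE has_integral_mult_right Iu)
  have IL: "((\<lambda>t. k * norm (u t)) has_integral k * integral {0..L} (\<lambda>t. norm (u t))) {0..L}"
    by (intro has_integral_mult_right Iu)
  show ?thesis
  proof -
    have "k * integral {0..L} (\<lambda>t. norm (u t)) \<le>
          0 + integral {0..L} (\<lambda>t. c / 2 * (\<beta> t * (norm (\<sigma> t - \<tau> t))\<^sup>2))
               + K * integral {0..L} (\<lambda>t. norm (u t)) - 0"
    proof (rule has_integral_le_ae[OF IL IR N])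
      fix t assume t: "t \<in> {0..L} - N"
      have t': "t \<in> {0<..<L}" "t \<notin> N1" "t \<notin> N2" using t by (auto simp: N_def)
      show "k * norm (u t) \<le> \<beta> t * (lam \<bullet> (\<sigma> t - \<tau> t)) + c / 2 * (\<beta> t * (norm (\<sigma> t - \<tau> t))\<^sup>2)
               + K * norm (u t) - E t" unfolding E_def
        by (rule pointwise_ineq) (use t' N1P[of t] N2P[of t] tS sS w t in auto)
    qed
    thus ?thesis by simp
  qed
qed



lemma Kinf_nonpos_L:
  assumes "L \<le> 0"
  shows "Kinf L f = -\<infinity>"
proof -
  have e: "{0<..<L} = {}" using assms by auto
  define M where "M = restrict_space (lborel :: real measure) {}"
  have sp: "space M = {}" by (simp add: M_def space_restrict_space)
  have "(\<lambda>t. ereal (norm (vector_derivative f (at t)))) \<in> borel_measurable M"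
    by (rule measurableI) (auto simp: sp)
  moreover have "emeasure M (space M) = 0" by (simp add: sp)
  ultimately have "esssup M (\<lambda>t. ereal (norm (vector_derivative f (at t)))) = -\<infinity>"
    by (intro esssup_zero_space)
  thus ?thesis unfolding Kinf_def e M_def .
qed

lemma Kinf_nonneg:
  assumes "L > 0"
  shows "Kinf L f \<ge> 0"
proof -
  define M where "M = restrict_space (lborel :: real measure) {0<..<L}"
  have "emeasure M (space M) = emeasure lborel {0<..<L}"
    by (simp add: M_def space_restrict_space emeasure_restrict_space)
  also have "\<dots> = ennreal L" using assms by simp
  finally have "emeasure M (space M) \<noteq> 0" using assms by simp
  hence "esssup M (\<lambda>t. 0 :: ereal) = 0" by (rule esssup_const)
  moreover have "esssup M (\<lambda>t. 0 :: ereal) \<le> esssup M (\<lambda>t. ereal (norm (vector_derivative f (at t))))"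
    by (rule esssup_mono) auto
  ultimately show ?thesis by (simp add: Kinf_def M_def)
qed

lemma Kinf_meas:
  fixes \<tau> :: "real \<Rightarrow> 'a::euclidean_space"
  assumes lip: "M-lipschitz_on {0..L} \<tau>" and L: "0 \<le> L"
  shows "(\<lambda>t. ereal (norm (vector_derivative \<tau> (at t)))) \<in> borel_measurable (restrict_space lborel {0<..<L})"
proof -
  define \<tau>e where "\<tau>e = clampext L \<tau>"
  have "M-lipschitz_on UNIV \<tau>e" unfolding \<tau>e_def by (rule clampext_lip[OF lip L])
  hence "continuous_on UNIV \<tau>e" by (rule lipschitz_on_continuous_on)
  hence "(\<lambda>t. vector_derivative \<tau>e (at t)) \<in> borel_measurable borel" by (rule vd_measurable)
  hence "(\<lambda>t. ereal (norm (vector_derivative \<tau>e (at t)))) \<in> borel_measurable borel" by measurable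
  hence "(\<lambda>t. ereal (norm (vector_derivative \<tau>e (at t)))) \<in> borel_measurable lborel" by simp
  hence m: "(\<lambda>t. ereal (norm (vector_derivative \<tau>e (at t)))) \<in> borel_measurable (restrict_space lborel {0<..<L})"
    by (rule measurable_restrict_space1)
  show ?thesis
  proof (rule measurable_cong[THEN iffD1, OF _ m])
    fix t assume "t \<in> space (restrict_space lborel {0<..<L})"
    hence "t \<in> {0<..<L}" by (simp add: space_restrict_space)
    hence "vector_derivative \<tau>e (at t) = vector_derivative \<tau> (at t)"
      unfolding \<tau>e_def by (rule clampext_local(2))
    thus "ereal (norm (vector_derivative \<tau>e (at t))) = ereal (norm (vector_derivative \<tau> (at t)))"
      by simp
  qed
qed

lemma Kinf_le:
  fixes \<tau> :: "real \<Rightarrow> 'a::euclidean_space"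
  assumes lip: "M-lipschitz_on {0..L} \<tau>" and L: "0 \<le> L"
    and ae: "AE t in lborel. t \<in> {0<..<L} \<longrightarrow> \<tau> differentiable (at t)"
  shows "Kinf L \<tau> \<le> ereal M"
  unfolding Kinf_def
proof (rule esssup_I[OF Kinf_meas[OF lip L]])
  define \<tau>e where "\<tau>e = clampext L \<tau>"
  have lipe: "M-lipschitz_on UNIV \<tau>e" unfolding \<tau>e_def by (rule clampext_lip[OF lip L])
  have "AE t in lborel. t \<in> {0<..<L} \<longrightarrow> ereal (norm (vector_derivative \<tau> (at t))) \<le> ereal M"
    using ae
  proof (rule AE_mp, intro AE_I2 impI)
    fix t assume t: "t \<in> {0<..<L} \<longrightarrow> \<tau> differentiable (at t)" "t \<in> {0<..<L}"
    hence "(\<tau> has_vector_derivative vector_derivative \<tau> (at t)) (at t)" using vector_derivative_works by blast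
    hence "(\<tau>e has_vector_derivative vector_derivative \<tau> (at t)) (at t)"
      unfolding \<tau>e_def by (subst clampext_local(1)[OF t(2)])
    thus "ereal (norm (vector_derivative \<tau> (at t))) \<le> ereal M" using lip_vderiv_bound[OF lipe] by simp
  qed
  thus "AE t in restrict_space lborel {0<..<L}. ereal (norm (vector_derivative \<tau> (at t))) \<le> ereal M"
    by (subst AE_restrict_space_iff) auto
qed

lemma Kinf_AE:
  assumes "Kinf L \<sigma> = ereal K"
  shows "AE t in lborel. t \<in> {0<..<L} \<longrightarrow> norm (vector_derivative \<sigma> (at t)) \<le> K"
proof -
  have "AE t in restrict_space lborel {0<..<L}. ereal (norm (vector_derivative \<sigma> (at t))) \<le> Kinf L \<sigma>"
    unfolding Kinf_def by (rule esssup_AE)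
  hence "AE t in lborel. t \<in> {0<..<L} \<longrightarrow> ereal (norm (vector_derivative \<sigma> (at t))) \<le> Kinf L \<sigma>"
    by (subst (asm) AE_restrict_space_iff) auto
  thus ?thesis using assms by simp
qed

lemma beta_bounds:
  assumes ell: "ell > 0" and apos: "\<forall>s\<in>{0..ell}. \<alpha> s > 0" and bv: "bounded_variation_on \<alpha> 0 ell"
    and ib: "\<exists>C. \<forall>s\<in>{0..ell}. 1 / \<alpha> s \<le> C" and Lp: "Lpar \<alpha> ell > 0"
  obtains C A where "C > 0" "\<And>t. t \<in> {0..Lpar \<alpha> ell} \<Longrightarrow> 1/C \<le> beta \<alpha> ell t \<and> beta \<alpha> ell t \<le> A"
proof -
  obtain C where C: "\<And>s. s \<in> {0..ell} \<Longrightarrow> 1 / \<alpha> s \<le> C" using ib by blast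
  have C0: "C > 0" using C[of 0] apos ell by (smt (verit) atLeastAtMost_iff divide_pos_pos)
  have alow: "1 / C \<le> \<alpha> s" if "s \<in> {0..ell}" for s
  proof -
    have "1 / \<alpha> s \<le> C" "\<alpha> s > 0" using C that apos by auto
    thus ?thesis using C0 by (simp add: divide_le_eq field_simps)
  qed
  obtain Bv where Bv: "\<And>xs. sorted xs \<Longrightarrow> set xs \<subseteq> {0..ell} \<Longrightarrow>
        (\<Sum>(x,y)\<leftarrow>zip xs (tl xs). \<bar>\<alpha> y - \<alpha> x\<bar>) \<le> Bv"
    using bv unfolding bounded_variation_on_def by blast
  define A where "A = \<alpha> 0 + Bv"
  have aup: "\<alpha> s \<le> A" if "s \<in> {0..ell}" for s
  proof -
    have "(\<Sum>(x,y)\<leftarrow>zip [0,s] (tl [0,s]). \<bar>\<alpha> y - \<alpha> x\<bar>) \<le> Bv"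
      by (rule Bv) (use that ell in auto)
    thus ?thesis by (simp add: A_def)
  qed
  have A0: "A > 0" using aup[of 0] apos ell by force
  define f where "f = (\<lambda>\<sigma>. 1 / \<alpha> \<sigma>)"
  have fint: "f integrable_on {0..ell}"
  proof (rule ccontr)
    assume "\<not> f integrable_on {0..ell}"
    hence "Lpar \<alpha> ell = 0" by (simp add: Lpar_def psi_def f_def not_integrable_integral)
    thus False using Lp by simp
  qed
  have psi_eq: "psi \<alpha> s = integral {0..s} f" for s by (simp add: psi_def f_def)
  have cont: "continuous_on {0..ell} (psi \<alpha>)"
    unfolding psi_eq[abs_def] by (rule indefinite_integral_continuous_1[OF fint])
  have smono: "psi \<alpha> s < psi \<alpha> s'" if "0 \<le> s" "s < s'" "s' \<le> ell" for s s'
  proof -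
    have i': "f integrable_on {0..s'}" by (rule integrable_subinterval_real[OF fint]) (use that in auto)
    have i2: "f integrable_on {s..s'}" by (rule integrable_subinterval_real[OF fint]) (use that in auto)
    have c1: "integral {0..s} f + integral {s..s'} f = integral {0..s'} f"
      by (rule Henstock_Kurzweil_Integration.integral_combine[OF _ _ i']) (use that in auto)
    have c2: "integral {s..s'} (\<lambda>_. 1 / A) \<le> integral {s..s'} f"
    proof (rule integral_le[OF _ i2])
      fix x assume "x \<in> {s..s'}"
      hence "x \<in> {0..ell}" using that by auto
      hence "\<alpha> x \<le> A" "\<alpha> x > 0" using aup apos by auto
      thus "1 / A \<le> f x" using A0 by (simp add: f_def frac_le)
    qed (rule integrable_const_ivl)
    have c3: "integral {s..s'} (\<lambda>_. 1 / A) = (s' - s) / A" using that by simp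
    have c4: "(s' - s) / A > 0" using that A0 by simp
    show ?thesis unfolding psi_eq using c1 c2 c3 c4 by linarith
  qed
  have inj: "inj_on (psi \<alpha>) {0..ell}"
  proof (rule inj_onI)
    fix x y assume "x \<in> {0..ell}" "y \<in> {0..ell}" "psi \<alpha> x = psi \<alpha> y"
    thus "x = y" using smono[of x y] smono[of y x] by (cases x y rule: linorder_cases) auto
  qed
  have psi0: "psi \<alpha> 0 = 0" by (simp add: psi_def)
  show ?thesis
  proof (rule that[OF C0])
    fix t assume t: "t \<in> {0..Lpar \<alpha> ell}"
    have "\<exists>x\<ge>0. x \<le> ell \<and> psi \<alpha> x = t"
      by (rule IVT') (use t psi0 ell cont in \<open>auto simp: Lpar_def\<close>)
    hence "t \<in> psi \<alpha> ` {0..ell}" by auto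
    hence "phi \<alpha> ell t \<in> {0..ell}" unfolding phi_def by (rule the_inv_into_into[OF inj]) simp
    thus "1/C \<le> beta \<alpha> ell t \<and> beta \<alpha> ell t \<le> A" using alow aup by (simp add: beta_def)
  qed
qed

theorem mainTheorem9:
  fixes \<alpha> :: "real \<Rightarrow> real" and ell :: real
    and a1 a2 T1 T2 :: "real ^ 'n"
    and \<tau> u :: "real \<Rightarrow> real ^ 'n" and lam :: "real ^ 'n"
  assumes n2: "CARD('n) \<ge> 2"
    and ell_pos: "ell > 0"
    and \<alpha>_pos: "\<forall>s\<in>{0..ell}. \<alpha> s > 0"
    and \<alpha>_bv: "bounded_variation_on \<alpha> 0 ell"
    and \<alpha>_inv_bdd: "\<exists>C. \<forall>s\<in>{0..ell}. 1 / \<alpha> s \<le> C"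
    and T1: "norm T1 = 1" and T2: "norm T2 = 1"
    and \<tau>_W: "W1inf (Lpar \<alpha> ell) \<tau>"
    and \<tau>_S: "sphere_valued (Lpar \<alpha> ell) \<tau>"
    and \<tau>_C: "constraintsC (Lpar \<alpha> ell) (beta \<alpha> ell) T1 T2 (a2 - a1) \<tau>"
    and u_W: "W1inf (Lpar \<alpha> ell) u"
    and u_nz: "\<exists>t\<in>{0..Lpar \<alpha> ell}. u t \<noteq> 0"
    and eqs: "AE t in lborel. t \<in> {0<..<Lpar \<alpha> ell} \<longrightarrow>
               u differentiable (at t) \<and> \<tau> differentiable (at t) \<and>
               vector_derivative u (at t) + (u t \<bullet> vector_derivative \<tau> (at t)) *\<^sub>R \<tau> t
                 = beta \<alpha> ell t *\<^sub>R (lam - (lam \<bullet> \<tau> t) *\<^sub>R \<tau> t) \<and>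
               norm (u t) *\<^sub>R vector_derivative \<tau> (at t)
                 = real_of_ereal (Kinf (Lpar \<alpha> ell) \<tau>) *\<^sub>R u t"
  shows "pseudo_minimiser (Lpar \<alpha> ell) (beta \<alpha> ell) T1 T2 (a2 - a1) \<tau>
    \<and> ((\<forall>t\<in>{0..Lpar \<alpha> ell}.
           real_of_ereal (Kinf (Lpar \<alpha> ell) \<tau>) * norm (u t) + beta \<alpha> ell t * (lam \<bullet> \<tau> t) \<le> 0)
        \<longrightarrow> (\<forall>\<tau>'. W1inf (Lpar \<alpha> ell) \<tau>' \<and> sphere_valued (Lpar \<alpha> ell) \<tau>'
                 \<and> constraintsC (Lpar \<alpha> ell) (beta \<alpha> ell) T1 T2 (a2 - a1) \<tau>'
                 \<longrightarrow> Kinf (Lpar \<alpha> ell) \<tau> \<le> Kinf (Lpar \<alpha> ell) \<tau>'))"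
proof -
  define L where "L = Lpar \<alpha> ell"
  define \<beta> where "\<beta> = beta \<alpha> ell"
  define a where "a = a2 - a1"
  note defs = L_def[symmetric] \<beta>_def[symmetric] a_def[symmetric]
  have L0: "L \<ge> 0" using u_nz by (auto simp: L_def)
  show ?thesis unfolding defs
  proof (cases "L > 0")
    case False
    hence Km: "Kinf L \<tau> = -\<infinity>" by (intro Kinf_nonpos_L) simp
    have "pseudo_minimiser L \<beta> T1 T2 a \<tau>"
      unfolding pseudo_minimiser_def using \<tau>_W \<tau>_S \<tau>_C Km by (auto simp: defs)
    thus "pseudo_minimiser L \<beta> T1 T2 a \<tau> \<and>
      ((\<forall>t\<in>{0..L}. real_of_ereal (Kinf L \<tau>) * norm (u t) + \<beta> t * (lam \<bullet> \<tau> t) \<le> 0) \<longrightarrow>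
       (\<forall>\<tau>'. W1inf L \<tau>' \<and> sphere_valued L \<tau>' \<and> constraintsC L \<beta> T1 T2 a \<tau>' \<longrightarrow> Kinf L \<tau> \<le> Kinf L \<tau>'))"
      using Km by simp
  next
    case True
    hence Lpos: "L > 0" .
    have eqs': "AE t in lborel. t \<in> {0<..<L} \<longrightarrow>
               u differentiable (at t) \<and> \<tau> differentiable (at t) \<and>
               vector_derivative u (at t) + (u t \<bullet> vector_derivative \<tau> (at t)) *\<^sub>R \<tau> t
                 = \<beta> t *\<^sub>R (lam - (lam \<bullet> \<tau> t) *\<^sub>R \<tau> t) \<and>
               norm (u t) *\<^sub>R vector_derivative \<tau> (at t)
                 = real_of_ereal (Kinf L \<tau>) *\<^sub>R u t" using eqs by (simp add: defs)
    obtain Mt where Mt: "Mt-lipschitz_on {0..L} \<tau>" using \<tau>_W by (auto simp: W1inf_def L_def)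
    obtain Mu where Mu: "Mu-lipschitz_on {0..L} u" using u_W by (auto simp: W1inf_def L_def)
    have tS: "\<forall>t\<in>{0..L}. norm (\<tau> t) = 1" using \<tau>_S by (simp add: sphere_valued_def L_def)
    have tC: "\<tau> 0 = T1" "\<tau> L = T2" "((\<lambda>t. \<beta> t *\<^sub>R \<tau> t) has_integral a) {0..L}"
      using \<tau>_C by (auto simp: constraintsC_def defs)
    have aetd: "AE t in lborel. t \<in> {0<..<L} \<longrightarrow> \<tau> differentiable (at t)"
      using eqs' by (rule AE_mp) (intro AE_I2, auto)
    have Kup: "Kinf L \<tau> \<le> ereal Mt" by (rule Kinf_le[OF Mt L0 aetd])
    have Klo: "Kinf L \<tau> \<ge> 0" by (rule Kinf_nonneg[OF Lpos])
    define k where "k = real_of_ereal (Kinf L \<tau>)"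
    have Kk: "Kinf L \<tau> = ereal k" using Kup Klo unfolding k_def by (cases "Kinf L \<tau>") auto
    have k0: "k \<ge> 0" using Klo Kk by simp
    have Lp: "Lpar \<alpha> ell > 0" using Lpos by (simp add: L_def)
    obtain C A where C: "C > 0" and CA: "\<And>t. t \<in> {0..L} \<Longrightarrow> 1/C \<le> \<beta> t \<and> \<beta> t \<le> A"
      using beta_bounds[OF ell_pos \<alpha>_pos \<alpha>_bv \<alpha>_inv_bdd Lp] by (auto simp: defs)
    have bpos: "\<beta> t > 0" if "t \<in> {0..L}" for t using CA[OF that] C by (smt (verit) divide_pos_pos)
    obtain Ub where Ub: "\<And>t. t \<in> {0..L} \<Longrightarrow> norm (u t) \<le> Ub" using lip_bounded_on[OF Mu] by blast
    define Iu where "Iu = integral {0..L} (\<lambda>t. norm (u t))"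
    have ucont: "continuous_on {0..L} (\<lambda>t. norm (u t))"
      using lipschitz_on_continuous_on[OF Mu] by (intro continuous_intros)
    have Iu0: "Iu > 0"
    proof -
      have "Iu \<ge> 0" unfolding Iu_def by (rule integral_nonneg[OF integrable_continuous_interval[OF ucont]]) simp
      moreover have "Iu \<noteq> 0"
      proof
        assume "Iu = 0"
        hence "((\<lambda>t. norm (u t)) has_integral 0) (cbox 0 L)"
          using integrable_integral[OF integrable_continuous_interval[OF ucont]] by (simp add: Iu_def)
        moreover obtain t0 where t0: "t0 \<in> {0..L}" "u t0 \<noteq> 0" using u_nz by (auto simp: L_def)
        ultimately have "norm (u t0) = 0"
          using has_integral_0_cbox_imp_0[of 0 L "\<lambda>t. norm (u t)" t0] ucont Lpos by auto
        thus False using t0 by simp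
      qed
      ultimately show ?thesis by simp
    qed
    have \<beta>m: "\<beta> \<in> borel_measurable (lebesgue_on {0..L})"
    proof -
      have "(\<lambda>t. \<beta> t *\<^sub>R \<tau> t) \<in> borel_measurable (lebesgue_on {0..L})"
        using tC(3) by (intro integrable_imp_measurable) blast
      moreover have "\<tau> \<in> borel_measurable (lebesgue_on {0..L})"
        by (rule continuous_imp_measurable_on_sets_lebesgue[OF lipschitz_on_continuous_on[OF Mt]]) simp
      ultimately have m: "(\<lambda>t. (\<beta> t *\<^sub>R \<tau> t) \<bullet> \<tau> t) \<in> borel_measurable (lebesgue_on {0..L})"
        by (rule borel_measurable_inner)
      show ?thesis
      proof (rule measurable_cong[THEN iffD1, OF _ m])
        fix t assume "t \<in> space (lebesgue_on {0..L})"
        hence "t \<in> {0..L}" by simp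
        hence "\<tau> t \<bullet> \<tau> t = 1" using tS by (simp add: dot_square_norm)
        thus "(\<beta> t *\<^sub>R \<tau> t) \<bullet> \<tau> t = \<beta> t" by simp
      qed
    qed
    have core: "k * Iu \<le> integral {0..L} (\<lambda>t. c / 2 * (\<beta> t * (norm (\<sigma> t - \<tau> t))\<^sup>2)) + K * Iu"
      if sW: "W1inf L \<sigma>" and sSv: "sphere_valued L \<sigma>" and sC: "constraintsC L \<beta> T1 T2 a \<sigma>"
        and KK: "Kinf L \<sigma> = ereal K"
        and w: "\<forall>t\<in>{0..L}. \<beta> t * (lam \<bullet> \<tau> t) + k * norm (u t) \<le> c * \<beta> t"
      for \<sigma> K c
    proof -
      obtain Ms where Ms: "Ms-lipschitz_on {0..L} \<sigma>" using sW by (auto simp: W1inf_def)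
      have sS: "\<forall>t\<in>{0..L}. norm (\<sigma> t) = 1" using sSv by (simp add: sphere_valued_def)
      have sC': "\<sigma> 0 = T1" "\<sigma> L = T2" "((\<lambda>t. \<beta> t *\<^sub>R \<sigma> t) has_integral a) {0..L}"
        using sC by (auto simp: constraintsC_def)
      have sm: "\<sigma> \<in> borel_measurable (lebesgue_on {0..L})"
        by (rule continuous_imp_measurable_on_sets_lebesgue[OF lipschitz_on_continuous_on[OF Ms]]) simp
      have tm: "\<tau> \<in> borel_measurable (lebesgue_on {0..L})"
        by (rule continuous_imp_measurable_on_sets_lebesgue[OF lipschitz_on_continuous_on[OF Mt]]) simp
      have Xm: "(\<lambda>t. c / 2 * (\<beta> t * (norm (\<sigma> t - \<tau> t))\<^sup>2)) \<in> borel_measurable (lebesgue_on {0..L})"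
        using \<beta>m sm tm by measurable
      have Xint: "(\<lambda>t. c / 2 * (\<beta> t * (norm (\<sigma> t - \<tau> t))\<^sup>2)) integrable_on {0..L}"
      proof (rule measurable_bounded_by_integrable_imp_integrable[OF Xm])
        show "(\<lambda>t. \<bar>c\<bar> / 2 * (A * 4)) integrable_on {0..L}" by (rule integrable_const_ivl)
        fix t assume t: "t \<in> {0..L}"
        have "norm (\<sigma> t - \<tau> t) \<le> norm (\<sigma> t) + norm (\<tau> t)" by (rule norm_triangle_ineq4)
        hence n2: "norm (\<sigma> t - \<tau> t) \<le> 2" using sS tS t by simp
        have "(norm (\<sigma> t - \<tau> t))\<^sup>2 \<le> 2\<^sup>2" by (rule power_mono[OF n2]) simp
        hence n4: "(norm (\<sigma> t - \<tau> t))\<^sup>2 \<le> 4" by simp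
        have "\<beta> t * (norm (\<sigma> t - \<tau> t))\<^sup>2 \<le> A * 4"
          using CA[OF t] bpos[OF t] n4 by (intro mult_mono) auto
        moreover have "0 \<le> \<beta> t * (norm (\<sigma> t - \<tau> t))\<^sup>2" using bpos[OF t] by simp
        ultimately have "\<bar>c\<bar> / 2 * (\<beta> t * (norm (\<sigma> t - \<tau> t))\<^sup>2) \<le> \<bar>c\<bar> / 2 * (A * 4)"
          by (intro mult_left_mono) auto
        moreover have "norm (c / 2 * (\<beta> t * (norm (\<sigma> t - \<tau> t))\<^sup>2)) = \<bar>c\<bar> / 2 * (\<beta> t * (norm (\<sigma> t - \<tau> t))\<^sup>2)"
          using \<open>0 \<le> \<beta> t * (norm (\<sigma> t - \<tau> t))\<^sup>2\<close> bpos[OF t] by (simp add: abs_mult)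
        ultimately show "norm (c / 2 * (\<beta> t * (norm (\<sigma> t - \<tau> t))\<^sup>2)) \<le> \<bar>c\<bar> / 2 * (A * 4)"
          by simp
      qed simp
      have Ks: "AE t in lborel. t \<in> {0<..<L} \<longrightarrow> norm (vector_derivative \<sigma> (at t)) \<le> K"
        by (rule Kinf_AE[OF KK])
      have "k * integral {0..L} (\<lambda>t. norm (u t)) \<le>
           integral {0..L} (\<lambda>t. c / 2 * (\<beta> t * (norm (\<sigma> t - \<tau> t))\<^sup>2)) + K * integral {0..L} (\<lambda>t. norm (u t))"
        by (rule core_ineq[OF Lpos Mt Ms Mu tS sS _ _ tC(3) sC'(3) eqs'[folded k_def] Ks w Xint])
           (use tC sC' in auto)
      thus ?thesis by (simp add: Iu_def)
    qed
    have Kfin: "\<exists>K. Kinf L \<sigma> = ereal K" if "Kinf L \<sigma> \<noteq> \<infinity>" for \<sigma> :: "real \<Rightarrow> real ^ 'n"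
      using Kinf_nonneg[OF Lpos, of \<sigma>] that by (cases "Kinf L \<sigma>") auto
    define c where "c = norm lam + k * Ub * C"
    have wc: "\<forall>t\<in>{0..L}. \<beta> t * (lam \<bullet> \<tau> t) + k * norm (u t) \<le> c * \<beta> t"
    proof
      fix t assume t: "t \<in> {0..L}"
      have "lam \<bullet> \<tau> t \<le> norm lam * norm (\<tau> t)" by (rule norm_cauchy_schwarz)
      hence "lam \<bullet> \<tau> t \<le> norm lam" using tS t by simp
      hence a1: "\<beta> t * (lam \<bullet> \<tau> t) \<le> \<beta> t * norm lam" using bpos[OF t] by (intro mult_left_mono) auto
      have "1 \<le> C * \<beta> t" using CA[OF t] C by (simp add: field_simps)
      have Ub0: "0 \<le> Ub" using Ub[OF t] norm_ge_zero order_trans by blast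
      have "k * norm (u t) \<le> k * Ub" using Ub[OF t] k0 by (intro mult_left_mono) auto
      also have "\<dots> = (k * Ub) * 1" by simp
      also have "\<dots> \<le> (k * Ub) * (C * \<beta> t)" using \<open>1 \<le> C * \<beta> t\<close> k0 Ub0 by (intro mult_left_mono) auto
      finally have a2: "k * norm (u t) \<le> k * Ub * C * \<beta> t" by (simp add: mult_ac)
      show "\<beta> t * (lam \<bullet> \<tau> t) + k * norm (u t) \<le> c * \<beta> t"
        using a1 a2 by (simp add: c_def algebra_simps)
    qed
    have part1: "pseudo_minimiser L \<beta> T1 T2 a \<tau>"
      unfolding pseudo_minimiser_def
    proof (intro conjI exI[of _ "c * L / Iu"] allI impI)
      show "W1inf L \<tau>" "sphere_valued L \<tau>" "constraintsC L \<beta> T1 T2 a \<tau>"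
        using \<tau>_W \<tau>_S \<tau>_C by (auto simp: defs)
      fix \<sigma> assume H: "W1inf L \<sigma> \<and> sphere_valued L \<sigma> \<and> constraintsC L \<beta> T1 T2 a \<sigma>"
      define J where "J = integral {0..L} (\<lambda>t. \<beta> t * (norm (\<sigma> t - \<tau> t))\<^sup>2)"
      show "Kinf L \<tau> \<le> Kinf L \<sigma> + ereal (c * L / Iu / (2 * L) * J)"
      proof (cases "Kinf L \<sigma> = \<infinity>")
        case True thus ?thesis by simp
      next
        case False
        then obtain K where KK: "Kinf L \<sigma> = ereal K" using Kfin by blast
        have "k * Iu \<le> integral {0..L} (\<lambda>t. c / 2 * (\<beta> t * (norm (\<sigma> t - \<tau> t))\<^sup>2)) + K * Iu"
          using core[of \<sigma> K c] H KK wc by blast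
        also have "integral {0..L} (\<lambda>t. c / 2 * (\<beta> t * (norm (\<sigma> t - \<tau> t))\<^sup>2)) = c / 2 * J"
          by (simp add: J_def)
        finally have "k * Iu \<le> c / 2 * J + K * Iu" .
        hence "k \<le> (c / 2 * J + K * Iu) / Iu" using Iu0 by (simp add: le_divide_eq)
        also have "\<dots> = K + c * L / Iu / (2 * L) * J" using Iu0 Lpos by (simp add: field_simps)
        finally show ?thesis using Kk KK by simp
      qed
    qed
    have part2: "Kinf L \<tau> \<le> Kinf L \<sigma>"
      if hyp: "\<forall>t\<in>{0..L}. real_of_ereal (Kinf L \<tau>) * norm (u t) + \<beta> t * (lam \<bullet> \<tau> t) \<le> 0"
        and H: "W1inf L \<sigma> \<and> sphere_valued L \<sigma> \<and> constraintsC L \<beta> T1 T2 a \<sigma>" for \<sigma>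
    proof (cases "Kinf L \<sigma> = \<infinity>")
      case True thus ?thesis by simp
    next
      case False
      then obtain K where KK: "Kinf L \<sigma> = ereal K" using Kfin by blast
      have w0: "\<forall>t\<in>{0..L}. \<beta> t * (lam \<bullet> \<tau> t) + k * norm (u t) \<le> 0 * \<beta> t"
        using hyp by (auto simp: k_def add.commute)
      have "k * Iu \<le> integral {0..L} (\<lambda>t. 0 / 2 * (\<beta> t * (norm (\<sigma> t - \<tau> t))\<^sup>2)) + K * Iu"
        using core[of \<sigma> K 0] H KK w0 by blast
      hence "k * Iu \<le> K * Iu" by simp
      hence "k \<le> K" using Iu0 by simp
      thus ?thesis using Kk KK by simp
    qed
    show "pseudo_minimiser L \<beta> T1 T2 a \<tau> \<and>
      ((\<forall>t\<in>{0..L}. real_of_ereal (Kinf L \<tau>) * norm (u t) + \<beta> t * (lam \<bullet> \<tau> t) \<le> 0) \<longrightarrow>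
       (\<forall>\<tau>'. W1inf L \<tau>' \<and> sphere_valued L \<tau>' \<and> constraintsC L \<beta> T1 T2 a \<tau>' \<longrightarrow> Kinf L \<tau> \<le> Kinf L \<tau>'))"
      using part1 part2 by blast
  qed
qed


end
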